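(* Let $G=(V,E)$ be a graph and $D\subseteq E$. Each of the following families of cycles is uncrossable: (for $G$ directed) the family $\mathcal{C}^{\rightarrow}_{\mathrm{all}}$ of all directed cycles and the family $\mathcal{C}^{\rightarrow}_{\mathrm{girth}}$ of all shortest directed cycles; (for $G$ undirected) the family $\mathcal{C}_{\mathrm{all}}$ of all cycles, the family $\mathcal{C}_{\mathrm{girth}}$ of all shortest cycles, the family $\mathcal{C}_{\mathrm{odd}}$ of all cycles with an odd number of edges, the family $\mathcal{C}_D^{=1}$ of all cycles containing exactly one edge of $D$, and the family $\mathcal{C}_D^{\ge 1}$ of all cycles containing at least one edge of $D$.
   Context: All cycles are simple; shortest means minimum number of edges. For paths/cycles, $P+Q$ is the union (multiset sum) of edge sets and $C-P$ the edge set of $C$ minus that of $P$. A family $\mathcal{C}$ of cycles is uncrossable if for all $C_1,C_2\in\mathcal{C}$ and every path $P_2$ in $C_2$ sharing only its two endpoints with $C_1$, there is a path $P_1$ in $C_1$ between these endpoints with $P_1+P_2\in\mathcal{C}$ and such that $(C_1-P_1)+(C_2-P_2)$ contains (the edge set of) a cycle of $\mathcal{C}$. *)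

theory Defs
  imports Main
begin

text \<open>Graphs are (multi)graphs given by a vertex set V, an edge set E and
  functions tail, head assigning endpoints to edges.  For a directed graph,
  edge e goes from tail e to head e; for an undirected graph the pair
  {tail e, head e} is the (unordered) set of endpoints of e.
  Paths and cycles are identified with their edge sets.\<close>

definition conn_dir :: "('e \<Rightarrow> 'v) \<Rightarrow> ('e \<Rightarrow> 'v) \<Rightarrow> 'e \<Rightarrow> 'v \<Rightarrow> 'v \<Rightarrow> bool" where
  "conn_dir tail head e u v \<longleftrightarrow> tail e = u \<and> head e = v"

definition conn_und :: "('e \<Rightarrow> 'v) \<Rightarrow> ('e \<Rightarrow> 'v) \<Rightarrow> 'e \<Rightarrow> 'v \<Rightarrow> 'v \<Rightarrow> bool" where
  "conn_und tail head e u v \<longleftrightarrow> (tail e = u \<and> head e = v) \<or> (tail e = v \<and> head e = u)"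

definition is_cycle :: "('e \<Rightarrow> 'v \<Rightarrow> 'v \<Rightarrow> bool) \<Rightarrow> 'e set \<Rightarrow> 'e set \<Rightarrow> bool" where
  "is_cycle conn E C \<longleftrightarrow>
     (\<exists>vs es. length vs = length es \<and> es \<noteq> [] \<and> distinct vs \<and> distinct es \<and>
        set es \<subseteq> E \<and>
        (\<forall>i<length es. conn (es ! i) (vs ! i) (vs ! ((Suc i) mod length es))) \<and>
        C = set es)"

definition is_path :: "('e \<Rightarrow> 'v \<Rightarrow> 'v \<Rightarrow> bool) \<Rightarrow> 'e set \<Rightarrow> 'e set \<Rightarrow> 'v \<Rightarrow> 'v \<Rightarrow> bool" where
  "is_path conn E P x y \<longleftrightarrow>
     (\<exists>vs es. length vs = Suc (length es) \<and> es \<noteq> [] \<and> distinct vs \<and> distinct es \<and>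
        set es \<subseteq> E \<and>
        (\<forall>i<length es. conn (es ! i) (vs ! i) (vs ! Suc i)) \<and>
        hd vs = x \<and> last vs = y \<and> P = set es)"

definition verts :: "('e \<Rightarrow> 'v) \<Rightarrow> ('e \<Rightarrow> 'v) \<Rightarrow> 'e set \<Rightarrow> 'v set" where
  "verts tail head F = tail ` F \<union> head ` F"

text \<open>Uncrossable family.  P1 + P2 (multiset sum) is the edge set of a cycle
  iff P1, P2 are disjoint and their union is that edge set.\<close>
definition uncrossable ::
  "('e \<Rightarrow> 'v \<Rightarrow> 'v \<Rightarrow> bool) \<Rightarrow> ('e \<Rightarrow> 'v) \<Rightarrow> ('e \<Rightarrow> 'v) \<Rightarrow> 'e set \<Rightarrow> 'e set set \<Rightarrow> bool" where
  "uncrossable conn tail head E \<C> \<longleftrightarrow>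
     (\<forall>C1\<in>\<C>. \<forall>C2\<in>\<C>. \<forall>P2 x y.
        is_path conn E P2 x y \<and> P2 \<subseteq> C2 \<and> verts tail head P2 \<inter> verts tail head C1 = {x, y} \<longrightarrow>
        (\<exists>P1. (is_path conn E P1 x y \<or> is_path conn E P1 y x) \<and> P1 \<subseteq> C1 \<and>
              P1 \<inter> P2 = {} \<and> P1 \<union> P2 \<in> \<C> \<and>
              (\<exists>C\<in>\<C>. C \<subseteq> (C1 - P1) \<union> (C2 - P2))))"

definition cycles_all :: "('e \<Rightarrow> 'v \<Rightarrow> 'v \<Rightarrow> bool) \<Rightarrow> 'e set \<Rightarrow> 'e set set" where
  "cycles_all conn E = {C. is_cycle conn E C}"

definition cycles_girth :: "('e \<Rightarrow> 'v \<Rightarrow> 'v \<Rightarrow> bool) \<Rightarrow> 'e set \<Rightarrow> 'e set set" where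
  "cycles_girth conn E = {C. is_cycle conn E C \<and> (\<forall>C'. is_cycle conn E C' \<longrightarrow> card C \<le> card C')}"

definition cycles_odd :: "('e \<Rightarrow> 'v \<Rightarrow> 'v \<Rightarrow> bool) \<Rightarrow> 'e set \<Rightarrow> 'e set set" where
  "cycles_odd conn E = {C. is_cycle conn E C \<and> odd (card C)}"

definition cycles_D_eq1 :: "('e \<Rightarrow> 'v \<Rightarrow> 'v \<Rightarrow> bool) \<Rightarrow> 'e set \<Rightarrow> 'e set \<Rightarrow> 'e set set" where
  "cycles_D_eq1 conn E D = {C. is_cycle conn E C \<and> card (C \<inter> D) = 1}"

definition cycles_D_ge1 :: "('e \<Rightarrow> 'v \<Rightarrow> 'v \<Rightarrow> bool) \<Rightarrow> 'e set \<Rightarrow> 'e set \<Rightarrow> 'e set set" where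
  "cycles_D_ge1 conn E D = {C. is_cycle conn E C \<and> C \<inter> D \<noteq> {}}"

end

theory Submission
  imports Defs
begin


definition wlk :: "('e \<Rightarrow> 'v \<Rightarrow> 'v \<Rightarrow> bool) \<Rightarrow> 'e set \<Rightarrow> nat \<Rightarrow> (nat \<Rightarrow> 'v) \<Rightarrow> (nat \<Rightarrow> 'e) \<Rightarrow> bool" where
  "wlk conn E m u e \<longleftrightarrow> (\<forall>i<m. conn (e i) (u i) (u (Suc i)) \<and> e i \<in> E)"

definition pth :: "('e \<Rightarrow> 'v \<Rightarrow> 'v \<Rightarrow> bool) \<Rightarrow> 'e set \<Rightarrow> nat \<Rightarrow> (nat \<Rightarrow> 'v) \<Rightarrow> (nat \<Rightarrow> 'e) \<Rightarrow> bool" where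
  "pth conn E m u e \<longleftrightarrow> 0 < m \<and> wlk conn E m u e \<and> inj_on u {..m} \<and> inj_on e {..<m}"

definition cyc :: "('e \<Rightarrow> 'v \<Rightarrow> 'v \<Rightarrow> bool) \<Rightarrow> 'e set \<Rightarrow> nat \<Rightarrow> (nat \<Rightarrow> 'v) \<Rightarrow> (nat \<Rightarrow> 'e) \<Rightarrow> bool" where
  "cyc conn E k v e \<longleftrightarrow> 0 < k \<and> (\<forall>i<k. conn (e i) (v i) (v (Suc i mod k)) \<and> e i \<in> E)
      \<and> inj_on v {..<k} \<and> inj_on e {..<k}"

lemma set_nth_img: "set xs = (!) xs ` {..<length xs}"
  by (auto simp: set_conv_nth)

lemma path_iff:
  "is_path conn E P x y \<longleftrightarrow> (\<exists>m u e. pth conn E m u e \<and> u 0 = x \<and> u m = y \<and> P = e ` {..<m})"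
proof
  assume "is_path conn E P x y"
  then obtain vs es where h: "length vs = Suc (length es)" "es \<noteq> []" "distinct vs" "distinct es"
        "set es \<subseteq> E" "\<forall>i<length es. conn (es ! i) (vs ! i) (vs ! Suc i)"
        "hd vs = x" "last vs = y" "P = set es"
    unfolding is_path_def by blast
  have "pth conn E (length es) ((!) vs) ((!) es)"
    unfolding pth_def wlk_def using h
    by (auto intro!: inj_on_nth simp: nth_mem subsetD)
  moreover have "vs \<noteq> []" using h(1) by auto
  then have "vs ! 0 = x" using h by (simp add: hd_conv_nth)
  moreover have "vs ! length es = y" using h \<open>vs \<noteq> []\<close> by (simp add: last_conv_nth)
  ultimately show "\<exists>m u e. pth conn E m u e \<and> u 0 = x \<and> u m = y \<and> P = e ` {..<m}"
    using h set_nth_img by metis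
next
  assume "\<exists>m u e. pth conn E m u e \<and> u 0 = x \<and> u m = y \<and> P = e ` {..<m}"
  then obtain m u e where h: "pth conn E m u e" "u 0 = x" "u m = y" "P = e ` {..<m}" by blast
  let ?vs = "map u [0..<Suc m]" and ?es = "map e [0..<m]"
  have "inj_on u {..m}" "inj_on e {..<m}" "0 < m" using h unfolding pth_def by auto
  then have "distinct ?vs" "distinct ?es"
    by (auto simp del: upt_Suc simp: distinct_map atLeast0LessThan lessThan_Suc_atMost)
  moreover have "set ?es \<subseteq> E" "\<forall>i<length ?es. conn (?es ! i) (?vs ! i) (?vs ! Suc i)"
    using h unfolding pth_def wlk_def by (auto simp del: upt_Suc simp: nth_append)
  moreover have "hd ?vs = x" "last ?vs = y" "P = set ?es" "?es \<noteq> []"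
    using h \<open>0 < m\<close> by (auto simp del: upt_Suc simp: hd_map last_map atLeast0LessThan)
  ultimately show "is_path conn E P x y" unfolding is_path_def
    by (intro exI[of _ ?vs] exI[of _ ?es]) (simp del: upt_Suc)
qed

lemma cycle_iff:
  "is_cycle conn E C \<longleftrightarrow> (\<exists>k v e. cyc conn E k v e \<and> C = e ` {..<k})"
proof
  assume "is_cycle conn E C"
  then obtain vs es where h: "length vs = length es" "es \<noteq> []" "distinct vs" "distinct es"
        "set es \<subseteq> E" "\<forall>i<length es. conn (es ! i) (vs ! i) (vs ! (Suc i mod length es))"
        "C = set es"
    unfolding is_cycle_def by blast
  have "cyc conn E (length es) ((!) vs) ((!) es)"
    unfolding cyc_def using h
    by (auto intro!: inj_on_nth simp: nth_mem subsetD)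
  then show "\<exists>k v e. cyc conn E k v e \<and> C = e ` {..<k}"
    using h set_nth_img by metis
next
  assume "\<exists>k v e. cyc conn E k v e \<and> C = e ` {..<k}"
  then obtain k v e where h: "cyc conn E k v e" "C = e ` {..<k}" by blast
  let ?vs = "map v [0..<k]" and ?es = "map e [0..<k]"
  have "inj_on v {..<k}" "inj_on e {..<k}" "0 < k" using h unfolding cyc_def by auto
  then have "distinct ?vs" "distinct ?es"
    by (auto simp: distinct_map atLeast0LessThan)
  moreover have "set ?es \<subseteq> E" "\<forall>i<length ?es. conn (?es ! i) (?vs ! i) (?vs ! (Suc i mod length ?es))"
    using h unfolding cyc_def by auto
  moreover have "C = set ?es" "?es \<noteq> []"
    using h \<open>0 < k\<close> by (auto simp: atLeast0LessThan)
  ultimately show "is_cycle conn E C" unfolding is_cycle_def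
    by (intro exI[of _ ?vs] exI[of _ ?es]) simp
qed



lemma rot_eq: "(i::nat) < k \<Longrightarrow> s < k \<Longrightarrow> (i + s) mod k = (if i + s < k then i + s else i + s - k)"
  by (cases "i + s < k") (auto simp: le_mod_geq)

lemma rot_inj: "(s::nat) < k \<Longrightarrow> inj_on (\<lambda>i. (i + s) mod k) {..<k}"
proof (rule inj_onI)
  fix x y assume "s < k" "x \<in> {..<k}" "y \<in> {..<k}" "(x + s) mod k = (y + s) mod k"
  then show "x = y" using rot_eq[of x k s] rot_eq[of y k s] by (auto split: if_splits)
qed

lemma rot_img: "(s::nat) < k \<Longrightarrow> (\<lambda>i. (i + s) mod k) ` {..<k} = {..<k}"
  by (rule endo_inj_surj) (auto simp: rot_inj)

locale endg =
  fixes conn :: "'e \<Rightarrow> 'v \<Rightarrow> 'v \<Rightarrow> bool" and tail head :: "'e \<Rightarrow> 'v"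
  assumes endp: "conn g a b \<Longrightarrow> (tail g = a \<and> head g = b) \<or> (tail g = b \<and> head g = a)"
begin

lemma endp_same: "conn g a b \<Longrightarrow> conn g c d \<Longrightarrow> a = c \<Longrightarrow> a \<noteq> b \<Longrightarrow> b = d"
  using endp[of g a b] endp[of g c d] by auto

lemma endp_mem: "conn g a b \<Longrightarrow> conn g c d \<Longrightarrow> a = c \<or> a = d"
  using endp[of g a b] endp[of g c d] by auto

lemma endp_verts: "conn g a b \<Longrightarrow> g \<in> F \<Longrightarrow> a \<in> verts tail head F \<and> b \<in> verts tail head F"
  using endp[of g a b] unfolding verts_def by auto

lemma verts_cyc:
  assumes "cyc conn E k v e" shows "verts tail head (e ` {..<k}) = v ` {..<k}"
proof
  show "verts tail head (e ` {..<k}) \<subseteq> v ` {..<k}"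
  proof
    fix z assume "z \<in> verts tail head (e ` {..<k})"
    then obtain i where i: "i < k" "z = tail (e i) \<or> z = head (e i)" unfolding verts_def by auto
    have "conn (e i) (v i) (v (Suc i mod k))" "Suc i mod k < k" using assms i unfolding cyc_def by auto
    then show "z \<in> v ` {..<k}" using endp[of "e i" "v i" "v (Suc i mod k)"] i by auto
  qed
next
  show "v ` {..<k} \<subseteq> verts tail head (e ` {..<k})"
  proof
    fix z assume "z \<in> v ` {..<k}"
    then obtain i where i: "i < k" "z = v i" by auto
    have "conn (e i) (v i) (v (Suc i mod k))" using assms i unfolding cyc_def by auto
    then show "z \<in> verts tail head (e ` {..<k})" using endp_verts i by blast
  qed
qed

lemma verts_pth:
  assumes "pth conn E m u e" shows "verts tail head (e ` {..<m}) = u ` {..m}"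
proof
  show "verts tail head (e ` {..<m}) \<subseteq> u ` {..m}"
  proof
    fix z assume "z \<in> verts tail head (e ` {..<m})"
    then obtain i where i: "i < m" "z = tail (e i) \<or> z = head (e i)" unfolding verts_def by auto
    have "conn (e i) (u i) (u (Suc i))" using assms i unfolding pth_def wlk_def by auto
    then show "z \<in> u ` {..m}" using endp[of "e i" "u i" "u (Suc i)"] i
      by (metis Suc_leI atMost_iff image_eqI less_imp_le_nat)
  qed
next
  show "u ` {..m} \<subseteq> verts tail head (e ` {..<m})"
  proof
    fix z assume "z \<in> u ` {..m}"
    then obtain i where i: "i \<le> m" "z = u i" by auto
    show "z \<in> verts tail head (e ` {..<m})"
    proof (cases "i < m")
      case True
      have "conn (e i) (u i) (u (Suc i))" using assms True unfolding pth_def wlk_def by auto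
      then show ?thesis using endp_verts True i by blast
    next
      case False
      then have "i = m" "0 < m" using i assms unfolding pth_def by auto
      have "conn (e (m - 1)) (u (m - 1)) (u (Suc (m - 1)))" using assms \<open>0 < m\<close> unfolding pth_def wlk_def
        by (metis diff_less zero_less_one)
      then show ?thesis using endp_verts \<open>0 < m\<close> \<open>i = m\<close> i
        by (metis One_nat_def Suc_pred diff_less image_eqI lessThan_iff zero_less_one)
    qed
  qed
qed

lemma rotate_cyc:
  assumes c: "cyc conn E k v e" and s: "s < k"
  shows "cyc conn E k (\<lambda>i. v ((i + s) mod k)) (\<lambda>i. e ((i + s) mod k))
     \<and> (\<lambda>i. e ((i + s) mod k)) ` {..<k} = e ` {..<k}"
proof -
  have k: "0 < k" using c unfolding cyc_def by auto
  have img: "(\<lambda>i. (i + s) mod k) ` {..<k} = {..<k}" using rot_img s .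
  have conn: "conn (e ((i + s) mod k)) (v ((i + s) mod k)) (v ((Suc i mod k + s) mod k)) \<and> e ((i + s) mod k) \<in> E"
    if "i < k" for i
  proof -
    have "(i + s) mod k < k" using k by auto
    then have "conn (e ((i + s) mod k)) (v ((i + s) mod k)) (v (Suc ((i + s) mod k) mod k)) \<and> e ((i + s) mod k) \<in> E"
      using c unfolding cyc_def by blast
    moreover have "Suc ((i + s) mod k) mod k = (Suc i mod k + s) mod k"
      by (simp add: mod_simps)
    ultimately show ?thesis by simp
  qed
  have "inj_on (v \<circ> (\<lambda>i. (i + s) mod k)) {..<k}"
    using c rot_inj[OF s] img unfolding cyc_def by (intro comp_inj_on) auto
  moreover have "inj_on (e \<circ> (\<lambda>i. (i + s) mod k)) {..<k}"
    using c rot_inj[OF s] img unfolding cyc_def by (intro comp_inj_on) auto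
  moreover have "(\<lambda>i. e ((i + s) mod k)) ` {..<k} = e ` {..<k}"
    using img by (metis image_image)
  ultimately show ?thesis using conn k unfolding cyc_def by (simp add: comp_def)
qed

lemma split_cyc:
  assumes c: "cyc conn E k v e" and j: "0 < j" "j < k"
  shows "pth conn E j v e" "pth conn E (k - j) (\<lambda>t. v ((j + t) mod k)) (\<lambda>t. e (j + t))"
    "(\<lambda>t. e (j + t)) ` {..<k - j} = e ` {j..<k}"
proof -
  show "pth conn E j v e" unfolding pth_def wlk_def
  proof (intro conjI allI impI)
    fix i assume "i < j"
    then have ik: "i < k" using j by auto
    then have "conn (e i) (v i) (v (Suc i mod k)) \<and> e i \<in> E" using c unfolding cyc_def by blast
    moreover have "Suc i < k" using \<open>i < j\<close> j by auto
    ultimately show "conn (e i) (v i) (v (Suc i))" "e i \<in> E" by auto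
  next
    show "inj_on v {..j}" using c j unfolding cyc_def by (auto intro: inj_on_subset)
    show "inj_on e {..<j}" using c j unfolding cyc_def by (auto intro: inj_on_subset)
  qed (use j in auto)
  show "pth conn E (k - j) (\<lambda>t. v ((j + t) mod k)) (\<lambda>t. e (j + t))" unfolding pth_def wlk_def
  proof (intro conjI allI impI)
    fix t assume t: "t < k - j"
    then have "conn (e (j + t)) (v (j + t)) (v (Suc (j + t) mod k)) \<and> e (j + t) \<in> E"
      using c j unfolding cyc_def by auto
    then show "conn (e (j + t)) (v ((j + t) mod k)) (v ((j + Suc t) mod k))" "e (j + t) \<in> E"
      using t by auto
  next
    have vi: "inj_on v {..<k}" using c unfolding cyc_def by auto
    show "inj_on (\<lambda>t. v ((j + t) mod k)) {..k - j}"
    proof (rule inj_onI)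
      fix a b assume a: "a \<in> {..k - j}" and b: "b \<in> {..k - j}" and eq: "v ((j + a) mod k) = v ((j + b) mod k)"
      have ma: "(j + a) mod k = (if j + a < k then j + a else 0)"
      proof (cases "j + a < k")
        case False then have "j + a = k" using a j by auto
        then show ?thesis by simp
      qed simp
      have mb: "(j + b) mod k = (if j + b < k then j + b else 0)"
      proof (cases "j + b < k")
        case False then have "j + b = k" using b j by auto
        then show ?thesis by simp
      qed simp
      have "(j + a) mod k = (j + b) mod k"
      proof -
        have "(j + a) mod k < k" "(j + b) mod k < k" using j by auto
        then show ?thesis using vi eq unfolding inj_on_def by blast
      qed
      then show "a = b" using ma mb a b j by (auto split: if_splits)
    qed
    show "inj_on (\<lambda>t. e (j + t)) {..<k - j}"
    proof (rule inj_onI)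
      fix a b assume "a \<in> {..<k - j}" "b \<in> {..<k - j}" "e (j + a) = e (j + b)"
      moreover have "inj_on e {..<k}" using c unfolding cyc_def by auto
      ultimately have "j + a = j + b" unfolding inj_on_def by (metis add.commute lessThan_iff less_diff_conv)
      then show "a = b" by simp
    qed
  qed (use j in auto)
  show "(\<lambda>t. e (j + t)) ` {..<k - j} = e ` {j..<k}"
  proof
    show "(\<lambda>t. e (j + t)) ` {..<k - j} \<subseteq> e ` {j..<k}" by auto
    show "e ` {j..<k} \<subseteq> (\<lambda>t. e (j + t)) ` {..<k - j}"
    proof
      fix z assume "z \<in> e ` {j..<k}"
      then obtain i where "j \<le> i" "i < k" "z = e i" by auto
      then show "z \<in> (\<lambda>t. e (j + t)) ` {..<k - j}"
        by (intro image_eqI[of _ _ "i - j"]) auto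
    qed
  qed
qed

end


context endg begin

lemma arc:
  assumes c: "cyc conn E k v e" and p: "pth conn E' m u f" and sub: "f ` {..<m} \<subseteq> e ` {..<k}"
    and u0: "u 0 = v 0" and f0: "f 0 = e 0"
  shows "t \<le> m \<Longrightarrow> t < k \<and> u t = v t \<and> (\<forall>s<t. f s = e s)"
proof (induction t)
  case 0 then show ?case using c u0 by (auto simp: cyc_def)
next
  case (Suc t)
  then have tm: "t < m" and tk: "t < k" and ut: "u t = v t" and IH: "\<forall>s<t. f s = e s" by auto
  have ui: "inj_on u {..m}" and fi: "inj_on f {..<m}" using p unfolding pth_def by auto
  have vi: "inj_on v {..<k}" using c unfolding cyc_def by auto
  have c1: "conn (f t) (u t) (u (Suc t))" using p tm unfolding pth_def wlk_def by auto
  have ft: "f t = e t"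
  proof (cases "t = 0")
    case True then show ?thesis using f0 by simp
  next
    case False
    obtain i where i: "i < k" "f t = e i" using sub tm by auto
    have c2: "conn (e i) (v i) (v (Suc i mod k))" using c i unfolding cyc_def by auto
    have "u t = v i \<or> u t = v (Suc i mod k)" using endp_mem[OF c1] c2 i by simp
    then show ?thesis
    proof
      assume "u t = v i"
      then have "t = i" using vi ut tk i unfolding inj_on_def by auto
      then show ?thesis using i by simp
    next
      assume "u t = v (Suc i mod k)"
      then have "t = Suc i mod k" using vi ut tk i unfolding inj_on_def
        by (metis lessThan_iff mod_less_divisor zero_less_iff_neq_zero less_nat_zero_code)
      moreover have "Suc i \<noteq> k" using calculation False by auto
      ultimately have "t = Suc i" using i by (simp add: Suc_lessI)
      then have "f t = f (t - 1)" using IH i by simp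
      then have "t = t - 1" using fi tm unfolding inj_on_def by (metis diff_le_self le_less_trans lessThan_iff)
      then show ?thesis using False by simp
    qed
  qed
  have c3: "conn (e t) (v t) (v (Suc t mod k))" using c tk unfolding cyc_def by auto
  have "u t \<noteq> u (Suc t)" using ui tm unfolding inj_on_def by fastforce
  then have us: "u (Suc t) = v (Suc t mod k)" using endp_same[of "e t" "u t" "u (Suc t)" "v t" "v (Suc t mod k)"] c1 c3 ft ut by simp
  have "Suc t \<noteq> k"
  proof
    assume "Suc t = k"
    then have "u (Suc t) = u 0" using us u0 by simp
    then show False using ui Suc.prems unfolding inj_on_def by fastforce
  qed
  then have "Suc t < k" using tk by simp
  then show ?case using us IH ft by (auto simp: less_Suc_eq)
qed

lemma compl_gen:
  assumes c: "cyc conn E k v e" and p: "pth conn E' m u f" and sub: "f ` {..<m} \<subseteq> e ` {..<k}"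
    and u0: "u 0 = v 0" and f0: "f 0 = e 0"
  shows "\<exists>n w g. pth conn E n w g \<and> w 0 = u m \<and> w n = u 0 \<and> g ` {..<n} = e ` {..<k} - f ` {..<m}"
proof -
  have a: "m < k" "u m = v m" "\<forall>s<m. f s = e s" using arc[OF c p sub u0 f0, of m] by auto
  have m0: "0 < m" using p unfolding pth_def by auto
  note s = split_cyc[OF c m0 a(1)]
  have img: "f ` {..<m} = e ` {..<m}" using a(3) by auto
  have ei: "inj_on e {..<k}" using c unfolding cyc_def by auto
  have "{m..<k} = {..<k} - {..<m}" by auto
  then have "e ` {m..<k} = e ` ({..<k} - {..<m})" by simp
  also have "\<dots> = e ` {..<k} - e ` {..<m}" using ei a(1) by (intro inj_on_image_set_diff) auto
  finally have "e ` {m..<k} = e ` {..<k} - f ` {..<m}" using img by simp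
  moreover have "(\<lambda>t. v ((m + t) mod k)) 0 = u m" using a by simp
  moreover have "(\<lambda>t. v ((m + t) mod k)) (k - m) = u 0" using a u0 by simp
  ultimately show ?thesis using s(2,3) by metis
qed

lemma join:
  assumes p: "pth conn E m u f" and q: "pth conn E n w g" and e1: "u m = w 0" and e2: "w n = u 0"
    and vv: "u ` {..m} \<inter> w ` {..n} \<subseteq> {u 0, u m}" and ee: "f ` {..<m} \<inter> g ` {..<n} = {}"
  shows "cyc conn E (m + n) (\<lambda>t. if t < m then u t else w (t - m)) (\<lambda>t. if t < m then f t else g (t - m))
    \<and> (\<lambda>t. if t < m then f t else g (t - m)) ` {..<m + n} = f ` {..<m} \<union> g ` {..<n}"
proof -
  define v where "v = (\<lambda>t. if t < m then u t else w (t - m))"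
  define e where "e = (\<lambda>t. if t < m then f t else g (t - m))"
  have m0: "0 < m" and n0: "0 < n" using p q unfolding pth_def by auto
  have ui: "inj_on u {..m}" and fi: "inj_on f {..<m}" using p unfolding pth_def by auto
  have wi: "inj_on w {..n}" and gi: "inj_on g {..<n}" using q unfolding pth_def by auto
  have cn: "conn (e i) (v i) (v (Suc i mod (m + n))) \<and> e i \<in> E" if i: "i < m + n" for i
  proof (cases "i < m")
    case True
    then have "Suc i mod (m + n) = Suc i" using n0 by auto
    moreover have "v (Suc i) = u (Suc i)"
    proof (cases "Suc i < m")
      case False then have "Suc i = m" using True by simp
      then show ?thesis using e1 by (simp add: v_def)
    qed (simp add: v_def)
    ultimately show ?thesis using p True unfolding pth_def wlk_def v_def e_def by auto
  next
    case False
    then have ci: "conn (g (i - m)) (w (i - m)) (w (Suc (i - m))) \<and> g (i - m) \<in> E"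
      using q i unfolding pth_def wlk_def by auto
    have "v (Suc i mod (m + n)) = w (Suc (i - m))"
    proof (cases "Suc i < m + n")
      case True then show ?thesis using False by (auto simp: v_def Suc_diff_le)
    next
      case F2: False
      then have "Suc i = m + n" using i by auto
      then have "Suc (i - m) = n" using False by auto
      then show ?thesis using e2 m0 \<open>Suc i = m + n\<close> by (auto simp: v_def)
    qed
    then show ?thesis using ci False by (auto simp: v_def e_def)
  qed
  have vi: "inj_on v {..<m + n}"
  proof (rule inj_onI)
    fix a b assume a: "a \<in> {..<m + n}" and b: "b \<in> {..<m + n}" and eq: "v a = v b"
    have mix: "False" if "a' < m" "m \<le> b'" "b' < m + n" "u a' = w (b' - m)" for a' b'
    proof -
      have "u a' \<in> u ` {..m}" using that(1) by simp
      moreover have "u a' \<in> w ` {..n}" using that by (intro image_eqI[of _ _ "b' - m"]) auto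
      ultimately have "u a' \<in> {u 0, u m}" using vv by blast
      moreover have "u a' \<noteq> u m" using ui that unfolding inj_on_def by fastforce
      ultimately have "u a' = w n" using e2 by auto
      then have "b' - m = n" using wi that unfolding inj_on_def by (metis atMost_iff less_diff_conv2 less_imp_le_nat order.refl add.commute)
      then show False using that by auto
    qed
    show "a = b"
    proof (cases "a < m"; cases "b < m")
      assume "a < m" "b < m" then show ?thesis using ui eq unfolding inj_on_def v_def by auto
    next
      assume "a < m" "\<not> b < m" then show ?thesis using mix[of a b] eq b by (auto simp: v_def)
    next
      assume "\<not> a < m" "b < m" then show ?thesis using mix[of b a] eq a by (auto simp: v_def)
    next
      assume "\<not> a < m" "\<not> b < m"
      then have "a - m = b - m" using wi eq a b unfolding inj_on_def v_def by auto
      then show ?thesis using \<open>\<not> a < m\<close> \<open>\<not> b < m\<close> by auto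
    qed
  qed
  have ei: "inj_on e {..<m + n}"
  proof (rule inj_onI)
    fix a b assume a: "a \<in> {..<m + n}" and b: "b \<in> {..<m + n}" and eq: "e a = e b"
    show "a = b"
    proof (cases "a < m"; cases "b < m")
      assume "a < m" "b < m" then show ?thesis using fi eq unfolding inj_on_def e_def by auto
    next
      assume "a < m" "\<not> b < m"
      moreover have "g (b - m) \<in> g ` {..<n}" using b calculation by auto
      ultimately show ?thesis using ee eq by (auto simp: e_def)
    next
      assume "\<not> a < m" "b < m"
      moreover have "g (a - m) \<in> g ` {..<n}" using a calculation by auto
      ultimately show ?thesis using ee eq by (auto simp: e_def)
    next
      assume "\<not> a < m" "\<not> b < m"
      then have "a - m = b - m" using gi eq a b unfolding inj_on_def e_def by auto
      then show ?thesis using \<open>\<not> a < m\<close> \<open>\<not> b < m\<close> by auto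
    qed
  qed
  have img: "e ` {..<m + n} = f ` {..<m} \<union> g ` {..<n}"
  proof
    show "e ` {..<m + n} \<subseteq> f ` {..<m} \<union> g ` {..<n}" by (auto simp: e_def)
    show "f ` {..<m} \<union> g ` {..<n} \<subseteq> e ` {..<m + n}"
    proof
      fix z assume "z \<in> f ` {..<m} \<union> g ` {..<n}"
      then show "z \<in> e ` {..<m + n}"
      proof
        assume "z \<in> f ` {..<m}" then obtain i where "i < m" "z = f i" by auto
        then show ?thesis by (intro image_eqI[of _ _ i]) (auto simp: e_def)
      next
        assume "z \<in> g ` {..<n}" then obtain i where "i < n" "z = g i" by auto
        then show ?thesis by (intro image_eqI[of _ _ "i + m"]) (auto simp: e_def)
      qed
    qed
  qed
  show ?thesis using cn vi ei img m0 unfolding cyc_def v_def e_def by auto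
qed

lemma single_edge:
  assumes p: "pth conn E m u f" and i: "i < m" and t: "tail (f i) \<in> {u 0, u m}" and h: "head (f i) \<in> {u 0, u m}"
  shows "m = 1"
proof -
  have c: "conn (f i) (u i) (u (Suc i))" using p i unfolding pth_def wlk_def by auto
  have ui: "inj_on u {..m}" using p unfolding pth_def by auto
  have "u i \<in> {u 0, u m}" "u (Suc i) \<in> {u 0, u m}" using endp[OF c] t h by auto
  moreover have "u i \<noteq> u m" using ui i unfolding inj_on_def by fastforce
  moreover have "u (Suc i) \<noteq> u 0" using ui i unfolding inj_on_def by fastforce
  ultimately have "u i = u 0" "u (Suc i) = u m" by auto
  then have "i = 0" "Suc i = m" using ui i unfolding inj_on_def by fastforce+
  then show ?thesis by simp
qed

end


lemma wlk_concat:
  assumes "wlk conn E m u e" "wlk conn E n w g" "u m = w 0"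
  shows "wlk conn E (m + n) (\<lambda>t. if t \<le> m then u t else w (t - m)) (\<lambda>t. if t < m then e t else g (t - m))"
  unfolding wlk_def
proof (intro allI impI)
  fix i assume i: "i < m + n"
  show "conn (if i < m then e i else g (i - m)) (if i \<le> m then u i else w (i - m))
          (if Suc i \<le> m then u (Suc i) else w (Suc i - m)) \<and> (if i < m then e i else g (i - m)) \<in> E"
  proof (cases "i < m")
    case True then show ?thesis using assms(1) unfolding wlk_def by auto
  next
    case False
    then have "conn (g (i - m)) (w (i - m)) (w (Suc (i - m))) \<and> g (i - m) \<in> E" using assms(2) i unfolding wlk_def by auto
    moreover have "(if i \<le> m then u i else w (i - m)) = w (i - m)" using False assms(3) by auto
    moreover have "Suc i - m = Suc (i - m)" using False by auto
    ultimately show ?thesis using False by auto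
  qed
qed

lemma wlk_cut:
  assumes w: "wlk conn E m u e" and ij: "i < j" "j \<le> m" and eq: "u i = u j"
  shows "wlk conn E (m - (j - i)) (\<lambda>t. if t \<le> i then u t else u (t + (j - i))) (\<lambda>t. if t < i then e t else e (t + (j - i)))"
    "(\<lambda>t. if t \<le> i then u t else u (t + (j - i))) 0 = u 0"
    "(\<lambda>t. if t \<le> i then u t else u (t + (j - i))) (m - (j - i)) = u m"
    "(\<lambda>t. if t < i then e t else e (t + (j - i))) ` {..<m - (j - i)} \<subseteq> e ` {..<m}"
proof -
  show "wlk conn E (m - (j - i)) (\<lambda>t. if t \<le> i then u t else u (t + (j - i))) (\<lambda>t. if t < i then e t else e (t + (j - i)))"
    unfolding wlk_def
  proof (intro allI impI)
    fix t assume t: "t < m - (j - i)"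
    show "conn (if t < i then e t else e (t + (j - i))) (if t \<le> i then u t else u (t + (j - i)))
          (if Suc t \<le> i then u (Suc t) else u (Suc t + (j - i))) \<and> (if t < i then e t else e (t + (j - i))) \<in> E"
    proof (cases "t < i")
      case True then show ?thesis using w ij unfolding wlk_def by auto
    next
      case False
      have "conn (e (t + (j - i))) (u (t + (j - i))) (u (Suc (t + (j - i)))) \<and> e (t + (j - i)) \<in> E"
        using w t unfolding wlk_def by auto
      moreover have "(if t \<le> i then u t else u (t + (j - i))) = u (t + (j - i))" using False eq ij by auto
      ultimately show ?thesis using False by auto
    qed
  qed
  show "(\<lambda>t. if t \<le> i then u t else u (t + (j - i))) 0 = u 0" by simp
  show "(\<lambda>t. if t \<le> i then u t else u (t + (j - i))) (m - (j - i)) = u m"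
  proof (cases "m - (j - i) \<le> i")
    case True then have "j = m" using ij by auto
    then show ?thesis using True eq ij by auto
  qed (use ij in auto)
  show "(\<lambda>t. if t < i then e t else e (t + (j - i))) ` {..<m - (j - i)} \<subseteq> e ` {..<m}"
    using ij by auto
qed

lemma wlk_seg:
  assumes w: "wlk conn E m u e" and ij: "i \<le> j" "j \<le> m"
  shows "wlk conn E (j - i) (\<lambda>t. u (i + t)) (\<lambda>t. e (i + t))"
    "(\<lambda>t. e (i + t)) ` {..<j - i} \<subseteq> e ` {..<m}"
  using assms unfolding wlk_def by auto

lemma closed_next: "u m = u 0 \<Longrightarrow> s < (m::nat) \<Longrightarrow> u (Suc s mod m) = u (Suc s)"
proof (cases "Suc s < m")
  case False
  assume "u m = u 0" "s < m"
  then have "Suc s = m" using False by auto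
  then show ?thesis using \<open>u m = u 0\<close> by simp
qed simp

context endg begin

lemma wlk_inj_edges:
  assumes w: "wlk conn E m u e" and ui: "inj_on u {..m}" shows "inj_on e {..<m}"
proof (rule inj_onI)
  have *: "False" if ab: "a < b" "b < m" "e a = e b" for a b
  proof -
    have c1: "conn (e a) (u a) (u (Suc a))" and c2: "conn (e b) (u b) (u (Suc b))" using w ab(1,2) unfolding wlk_def by auto
    have "u a = u b \<or> u a = u (Suc b)" using endp_mem[OF c1] c2 ab(3) by simp
    then show False using ui ab unfolding inj_on_def by fastforce
  qed
  fix a b assume "a \<in> {..<m}" "b \<in> {..<m}" "e a = e b"
  then show "a = b" using *[of a b] *[of b a] by (metis lessThan_iff nat_neq_iff)
qed

lemma shorten:
  "wlk conn E m u e \<Longrightarrow> u 0 \<noteq> u m \<Longrightarrow>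
    \<exists>m' u' e'. pth conn E m' u' e' \<and> u' 0 = u 0 \<and> u' m' = u m \<and> e' ` {..<m'} \<subseteq> e ` {..<m}"
proof (induction m arbitrary: u e rule: less_induct)
  case (less m u e)
  show ?case
  proof (cases "inj_on u {..m}")
    case True
    have "0 < m" using less.prems by (cases m) auto
    then have "pth conn E m u e" using True less.prems wlk_inj_edges unfolding pth_def by auto
    then show ?thesis by blast
  next
    case False
    then obtain a b where ab: "a \<le> m" "b \<le> m" "a \<noteq> b" "u a = u b" unfolding inj_on_def by auto
    have "\<exists>i j. i < j \<and> j \<le> m \<and> u i = u j"
    proof (cases "a < b")
      case True then show ?thesis using ab by blast
    next
      case False then have "b < a" using ab(3) by auto
      then show ?thesis using ab by (intro exI[of _ b] exI[of _ a]) auto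
    qed
    then obtain i j where ij: "i < j" "j \<le> m" "u i = u j" by blast
    note c = wlk_cut[OF less.prems(1) ij]
    have "m - (j - i) < m" using ij by auto
    from less.IH[OF this c(1)] c(2,3) less.prems(2)
    obtain m' u' e' where r: "pth conn E m' u' e'" "u' 0 = u 0" "u' m' = u m"
      "e' ` {..<m'} \<subseteq> (\<lambda>t. if t < i then e t else e (t + (j - i))) ` {..<m - (j - i)}"
      by auto
    have "e' ` {..<m'} \<subseteq> e ` {..<m}" using r(4) c(4) by (rule subset_trans)
    then show ?thesis using r by blast
  qed
qed

lemma pth_edge:
  assumes "conn g a b" "g \<in> E" "a \<noteq> b"
  shows "pth conn E 1 (\<lambda>t. if t = 0 then a else b) (\<lambda>_. g)"
  using assms unfolding pth_def wlk_def inj_on_def by auto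

lemma loop_cycle:
  assumes "conn g a a" "g \<in> E" shows "is_cycle conn E {g}"
proof -
  have "cyc conn E 1 (\<lambda>_. a) (\<lambda>_. g)" using assms unfolding cyc_def inj_on_def by auto
  then show ?thesis unfolding cycle_iff by (intro exI[of _ 1] exI[of _ "\<lambda>_. a"] exI[of _ "\<lambda>_. g"]) auto
qed

lemma close_cycle_pth:
  assumes c: "conn g a b" "g \<in> E" and p: "pth conn E n w h" "w 0 = b" "w n = a" and ng: "g \<notin> h ` {..<n}"
  shows "is_cycle conn E (insert g (h ` {..<n}))"
proof -
  have "a \<noteq> b" using p unfolding pth_def inj_on_def by fastforce
  note pe = pth_edge[OF c this]
  have e1: "(\<lambda>t::nat. if t = 0 then a else b) 1 = w 0" using p by simp
  have e2: "w n = (\<lambda>t::nat. if t = 0 then a else b) 0" using p by simp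
  have vv: "(\<lambda>t::nat. if t = 0 then a else b) ` {..1} \<inter> w ` {..n} \<subseteq>
      {(\<lambda>t::nat. if t = 0 then a else b) 0, (\<lambda>t::nat. if t = 0 then a else b) 1}" by auto
  have ee: "(\<lambda>_. g) ` {..<1::nat} \<inter> h ` {..<n} = {}" using ng by auto
  note J = join[OF pe p(1) e1 e2 vv ee]
  moreover have "(\<lambda>_. g) ` {..<1::nat} \<union> h ` {..<n} = insert g (h ` {..<n})" by auto
  ultimately show ?thesis unfolding cycle_iff by (intro exI conjI) auto
qed

lemma close_cycle_wlk:
  assumes c: "conn g a b" "g \<in> E" and w: "wlk conn E n w h" "w 0 = b" "w n = a" and ng: "g \<notin> h ` {..<n}"
  shows "\<exists>C. is_cycle conn E C \<and> g \<in> C \<and> C \<subseteq> insert g (h ` {..<n})"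
proof (cases "a = b")
  case True then show ?thesis using loop_cycle c by blast
next
  case False
  then have "w 0 \<noteq> w n" using w by simp
  then obtain m' u' e' where p: "pth conn E m' u' e'" "u' 0 = b" "u' m' = a" "e' ` {..<m'} \<subseteq> h ` {..<n}"
    using shorten[OF w(1)] w by auto
  then have "is_cycle conn E (insert g (e' ` {..<m'}))" using close_cycle_pth[OF c p(1-3)] ng by auto
  then show ?thesis using p(4) by blast
qed

lemma through_closed:
  assumes w: "wlk conn E m u e" and cl: "u m = u 0" and i: "i < m" and un: "\<forall>j<m. e j = e i \<longrightarrow> j = i"
  shows "\<exists>C. is_cycle conn E C \<and> e i \<in> C \<and> C \<subseteq> e ` {..<m}"
proof -
  define w' where "w' = (\<lambda>t. u ((Suc i + t) mod m))"
  define h where "h = (\<lambda>t. e ((Suc i + t) mod m))"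
  have ww: "wlk conn E (m - 1) w' h" unfolding wlk_def
  proof (intro allI impI)
    fix t assume t: "t < m - 1"
    define s where "s = (Suc i + t) mod m"
    have s: "s < m" using i unfolding s_def by auto
    have "conn (e s) (u s) (u (Suc s)) \<and> e s \<in> E" using w s unfolding wlk_def by auto
    moreover have "(Suc i + Suc t) mod m = Suc s mod m" unfolding s_def by (simp add: mod_simps)
    ultimately show "conn (h t) (w' t) (w' (Suc t)) \<and> h t \<in> E"
      using closed_next[of u m s, OF cl s] unfolding w'_def h_def s_def by auto
  qed
  have w0: "w' 0 = u (Suc i)" unfolding w'_def using closed_next[of u m i, OF cl i] by simp
  have wn: "w' (m - 1) = u i"
  proof -
    have "Suc i + (m - 1) = i + m" using i by auto
    then show ?thesis unfolding w'_def using i by simp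
  qed
  have ng: "e i \<notin> h ` {..<m - 1}"
  proof
    assume "e i \<in> h ` {..<m - 1}"
    then obtain t where t: "t < m - 1" "e i = e ((Suc i + t) mod m)" unfolding h_def by auto
    have sm: "(Suc i + t) mod m < m" using i by auto
    have eq: "(Suc i + t) mod m = i" using un[rule_format, OF sm] t(2) by simp
    show False
    proof (cases "Suc i + t < m")
      case True then show False using eq by simp
    next
      case False
      then have "(Suc i + t) mod m = Suc i + t - m" using t i by (simp add: le_mod_geq)
      then show False using eq t i by auto
    qed
  qed
  have c: "conn (e i) (u i) (u (Suc i))" "e i \<in> E" using w i unfolding wlk_def by auto
  obtain C where "is_cycle conn E C" "e i \<in> C" "C \<subseteq> insert (e i) (h ` {..<m - 1})"
    using close_cycle_wlk[OF c ww w0 wn ng] by blast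
  moreover have "h ` {..<m - 1} \<subseteq> e ` {..<m}" unfolding h_def using i by auto
  ultimately show ?thesis using i by blast
qed

lemma odd_closed:
  "wlk conn E m u e \<Longrightarrow> u m = u 0 \<Longrightarrow> odd m \<Longrightarrow> \<exists>C. is_cycle conn E C \<and> C \<subseteq> e ` {..<m} \<and> odd (card C)"
proof (induction m arbitrary: u e rule: less_induct)
  case (less m u e)
  show ?case
  proof (cases "inj_on u {..<m}")
    case True
    have m0: "0 < m" using less.prems by (cases m) auto
    have cn: "conn (e s) (u s) (u (Suc s mod m)) \<and> e s \<in> E" if "s < m" for s
      using less.prems(1) closed_next[of u m s, OF less.prems(2) that] that unfolding wlk_def by auto
    have ei: "inj_on e {..<m}"
    proof (rule inj_onI)
      have *: "False" if ab: "a < b" "b < m" "e a = e b" for a b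
      proof -
        have c0: "conn (e b) (u b) (u (Suc b mod m))" using cn[of b] ab(2) by auto
        have c1a: "conn (e a) (u a) (u (Suc a mod m))" using cn[of a] ab(1,2) by auto
        have c1b: "conn (e a) (u b) (u (Suc b mod m))" using c0 ab(3) by simp
        note c1 = c1a c1b
        have sa: "Suc a mod m = Suc a" using ab by auto
        have "u a = u b \<or> u a = u (Suc b mod m)" using endp_mem c1 by blast
        moreover have "u a \<noteq> u b" using True ab unfolding inj_on_def by fastforce
        ultimately have "u a = u (Suc b mod m)" by simp
        moreover have "Suc b mod m < m" using m0 by simp
        ultimately have "a = Suc b mod m" using True ab by (auto dest: inj_onD)
        then have a0: "a = 0" "Suc b = m" using ab by (auto simp: mod_if split: if_splits)
        have "u b = u a \<or> u b = u (Suc a mod m)" using endp_mem c1 by blast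
        then have "u b = u (Suc a mod m)" using \<open>u a \<noteq> u b\<close> by auto
        moreover have "Suc a < m" using ab by simp
        ultimately have "b = Suc a" using True ab sa by (auto dest: inj_onD)
        then show False using a0 less.prems(3) by auto
      qed
      fix a b assume "a \<in> {..<m}" "b \<in> {..<m}" "e a = e b"
      then show "a = b" using *[of a b] *[of b a] by (metis lessThan_iff nat_neq_iff)
    qed
    have "cyc conn E m u e" using cn True ei m0 unfolding cyc_def by auto
    then have "is_cycle conn E (e ` {..<m})" unfolding cycle_iff by blast
    moreover have "card (e ` {..<m}) = m" using ei by (simp add: card_image)
    ultimately show ?thesis using less.prems(3) by auto
  next
    case False
    then obtain a b where ab: "a < m" "b < m" "a \<noteq> b" "u a = u b" unfolding inj_on_def by auto
    have "\<exists>i j. i < j \<and> j < m \<and> u i = u j"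
    proof (cases "a < b")
      case True then show ?thesis using ab by blast
    next
      case False then have "b < a" using ab(3) by auto
      then show ?thesis using ab by (intro exI[of _ b] exI[of _ a]) auto
    qed
    then obtain i j where ij: "i < j" "j < m" "u i = u j" by blast
    note c = wlk_cut[OF less.prems(1) ij(1) less_imp_le[OF ij(2)] ij(3)]
    note sg = wlk_seg[OF less.prems(1) less_imp_le[OF ij(1)]]
    show ?thesis
    proof (cases "odd (j - i)")
      case True
      have "j - i < m" using ij by auto
      moreover have "u (i + (j - i)) = u (i + 0)" using ij by simp
      moreover have sgw: "wlk conn E (j - i) (\<lambda>t. u (i + t)) (\<lambda>t. e (i + t))"
        using sg(1) ij by auto
      ultimately obtain C where "is_cycle conn E C" "C \<subseteq> (\<lambda>t. e (i + t)) ` {..<j - i}" "odd (card C)"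
        using less.IH[of "j - i" "\<lambda>t. u (i + t)" "\<lambda>t. e (i + t)"] True by blast
      moreover have "(\<lambda>t. e (i + t)) ` {..<j - i} \<subseteq> e ` {..<m}" using sg(2) ij by auto
      ultimately show ?thesis by blast
    next
      case False
      have eqm: "m = (m - (j - i)) + (j - i)" using ij by auto
      have "odd ((m - (j - i)) + (j - i))" using less.prems(3) eqm by metis
      then have od: "odd (m - (j - i))" using False by simp
      have "m - (j - i) < m" using ij by auto
      from less.IH[OF this c(1) _ od] c(2,3,4) less.prems(2) ij
      obtain C where "is_cycle conn E C" "C \<subseteq> (\<lambda>t. if t < i then e t else e (t + (j - i))) ` {..<m - (j - i)}" "odd (card C)"
        by auto
      moreover note c(4)
      ultimately show ?thesis by (meson subset_trans)
    qed
  qed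
qed

end


context endg begin

lemma path_props:
  assumes "is_path conn E P x y" shows "finite P" "P \<noteq> {}" "x \<noteq> y" "P \<subseteq> E"
proof -
  obtain m u e where p: "pth conn E m u e" "u 0 = x" "u m = y" "P = e ` {..<m}"
    using assms unfolding path_iff by blast
  then show "finite P" by simp
  show "P \<noteq> {}" using p unfolding pth_def by auto
  show "x \<noteq> y" using p unfolding pth_def inj_on_def by fastforce
  show "P \<subseteq> E" using p unfolding pth_def wlk_def by auto
qed

lemma cycle_fin: "is_cycle conn E C \<Longrightarrow> finite C"
  unfolding cycle_iff by auto

lemma card_pth: "pth conn E m u e \<Longrightarrow> card (e ` {..<m}) = m"
  unfolding pth_def by (simp add: card_image)

lemma split_set:
  assumes c: "is_cycle conn E C1" and x: "x \<in> verts tail head C1" and y: "y \<in> verts tail head C1" and xy: "x \<noteq> y"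
  shows "\<exists>A B. is_path conn E A x y \<and> is_path conn E B y x \<and> A \<inter> B = {} \<and> A \<union> B = C1"
proof -
  obtain k v e where ce: "cyc conn E k v e" "C1 = e ` {..<k}" using c unfolding cycle_iff by blast
  have vv: "verts tail head C1 = v ` {..<k}" using verts_cyc[OF ce(1)] ce(2) by simp
  obtain s where s: "s < k" "x = v s" using x vv by auto
  define v' where "v' = (\<lambda>i. v ((i + s) mod k))"
  define e' where "e' = (\<lambda>i. e ((i + s) mod k))"
  have c': "cyc conn E k v' e'" and im: "e' ` {..<k} = C1"
    using rotate_cyc[OF ce(1) s(1)] ce(2) unfolding v'_def e'_def by auto
  have vv': "verts tail head C1 = v' ` {..<k}" using verts_cyc[OF c'] im by simp
  obtain j where j: "j < k" "y = v' j" using y vv' by auto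
  have x0: "v' 0 = x" using s unfolding v'_def by simp
  have "j \<noteq> 0"
  proof
    assume "j = 0" then show False using j x0 xy by simp
  qed
  then have j0: "0 < j" by simp
  note sp = split_cyc[OF c' j0 j(1)]
  have ei: "inj_on e' {..<k}" using c' unfolding cyc_def by auto
  have A: "is_path conn E (e' ` {..<j}) x y" unfolding path_iff using sp(1) x0 j by blast
  have "v' ((j + (k - j)) mod k) = x" using x0 j by simp
  moreover have "v' ((j + 0) mod k) = y" using j by simp
  ultimately have B: "is_path conn E (e' ` {j..<k}) y x" unfolding path_iff using sp(2,3) by metis
  have "e' ` {..<j} \<inter> e' ` {j..<k} = {}"
  proof -
    have "e' ` {..<j} \<inter> e' ` {j..<k} = e' ` ({..<j} \<inter> {j..<k})"
      using ei j by (intro inj_on_image_Int[symmetric]) auto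
    then show ?thesis by auto
  qed
  moreover have "e' ` {..<j} \<union> e' ` {j..<k} = C1"
  proof -
    have "{..<j} \<union> {j..<k} = {..<k}" using j by auto
    then show ?thesis using im by (metis image_Un)
  qed
  ultimately show ?thesis using A B by blast
qed

lemma join_set:
  assumes p: "is_path conn E P x y" and q: "is_path conn E Q y x"
    and vv: "verts tail head P \<inter> verts tail head Q \<subseteq> {x, y}" and ee: "P \<inter> Q = {}"
  shows "is_cycle conn E (P \<union> Q)"
proof -
  obtain m u f where p': "pth conn E m u f" "u 0 = x" "u m = y" "P = f ` {..<m}" using p unfolding path_iff by blast
  obtain n w g where q': "pth conn E n w g" "w 0 = y" "w n = x" "Q = g ` {..<n}" using q unfolding path_iff by blast
  have "u ` {..m} \<inter> w ` {..n} \<subseteq> {u 0, u m}" using vv verts_pth[OF p'(1)] verts_pth[OF q'(1)] p' q' by auto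
  from join[OF p'(1) q'(1) _ _ this] p' q' ee
  show ?thesis unfolding cycle_iff by (intro exI conjI) auto
qed

lemma single_set:
  assumes p: "is_path conn E P x y" and g: "g \<in> P" and t: "tail g \<in> {x, y}" and h: "head g \<in> {x, y}"
  shows "P = {g}"
proof -
  obtain m u f where p': "pth conn E m u f" "u 0 = x" "u m = y" "P = f ` {..<m}" using p unfolding path_iff by blast
  obtain i where i: "i < m" "g = f i" using g p' by auto
  have "m = 1" using single_edge[OF p'(1) i(1)] t h i p' by auto
  then show ?thesis using p' i by auto
qed

lemma concat_closed:
  assumes p: "pth conn E m u f" "u 0 = a" "u m = b" and q: "pth conn E n w g" "w 0 = b" "w n = a"
  shows "wlk conn E (m + n) (\<lambda>t. if t \<le> m then u t else w (t - m)) (\<lambda>t. if t < m then f t else g (t - m))"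
    "(\<lambda>t. if t \<le> m then u t else w (t - m)) (m + n) = (\<lambda>t. if t \<le> m then u t else w (t - m)) 0"
    "(\<lambda>t. if t < m then f t else g (t - m)) ` {..<m + n} = f ` {..<m} \<union> g ` {..<n}"
proof -
  show "wlk conn E (m + n) (\<lambda>t. if t \<le> m then u t else w (t - m)) (\<lambda>t. if t < m then f t else g (t - m))"
    using wlk_concat[of conn E m u f n w g] p q unfolding pth_def by auto
  show "(\<lambda>t. if t \<le> m then u t else w (t - m)) (m + n) = (\<lambda>t. if t \<le> m then u t else w (t - m)) 0"
    using p q unfolding pth_def by auto
  show "(\<lambda>t. if t < m then f t else g (t - m)) ` {..<m + n} = f ` {..<m} \<union> g ` {..<n}"
  proof
    show "(\<lambda>t. if t < m then f t else g (t - m)) ` {..<m + n} \<subseteq> f ` {..<m} \<union> g ` {..<n}" by auto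
    show "f ` {..<m} \<union> g ` {..<n} \<subseteq> (\<lambda>t. if t < m then f t else g (t - m)) ` {..<m + n}"
    proof
      fix z assume "z \<in> f ` {..<m} \<union> g ` {..<n}"
      then show "z \<in> (\<lambda>t. if t < m then f t else g (t - m)) ` {..<m + n}"
      proof
        assume "z \<in> f ` {..<m}" then obtain i where "i < m" "z = f i" by auto
        then show ?thesis by (intro image_eqI[of _ _ i]) auto
      next
        assume "z \<in> g ` {..<n}" then obtain i where "i < n" "z = g i" by auto
        then show ?thesis by (intro image_eqI[of _ _ "i + m"]) auto
      qed
    qed
  qed
qed

lemma through_set:
  assumes p: "is_path conn E Op a b" and q: "is_path conn E R b a" and z: "z \<in> Op - R \<or> z \<in> R - Op"
  shows "\<exists>C. is_cycle conn E C \<and> z \<in> C \<and> C \<subseteq> Op \<union> R"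
proof -
  obtain m u f where p': "pth conn E m u f" "u 0 = a" "u m = b" "Op = f ` {..<m}" using p unfolding path_iff by blast
  obtain n w g where q': "pth conn E n w g" "w 0 = b" "w n = a" "R = g ` {..<n}" using q unfolding path_iff by blast
  define V where "V = (\<lambda>t. if t \<le> m then u t else w (t - m))"
  define F where "F = (\<lambda>t. if t < m then f t else g (t - m))"
  note cc = concat_closed[OF p'(1-3) q'(1-3), folded V_def F_def]
  have fi: "inj_on f {..<m}" using p' unfolding pth_def by auto
  have gi: "inj_on g {..<n}" using q' unfolding pth_def by auto
  have "\<exists>i<m + n. F i = z \<and> (\<forall>j<m + n. F j = F i \<longrightarrow> j = i)"
    using z
  proof
    assume z1: "z \<in> Op - R"
    then obtain i where i: "i < m" "z = f i" using p' by auto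
    have "\<forall>j<m + n. F j = F i \<longrightarrow> j = i"
    proof (intro allI impI)
      fix j assume j: "j < m + n" "F j = F i"
      show "j = i"
      proof (cases "j < m")
        case True then show ?thesis using j i fi unfolding F_def inj_on_def by auto
      next
        case False
        then have "g (j - m) = z" using j i unfolding F_def by auto
        moreover have "g (j - m) \<in> R" using q' j False by auto
        ultimately show ?thesis using z1 by auto
      qed
    qed
    then show ?thesis using i unfolding F_def by (intro exI[of _ i]) auto
  next
    assume z1: "z \<in> R - Op"
    then obtain i where i: "i < n" "z = g i" using q' by auto
    have "\<forall>j<m + n. F j = F (i + m) \<longrightarrow> j = i + m"
    proof (intro allI impI)
      fix j assume j: "j < m + n" "F j = F (i + m)"
      show "j = i + m"
      proof (cases "j < m")
        case True
        then have "f j = z" using j i unfolding F_def by auto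
        moreover have "f j \<in> Op" using p' True by auto
        ultimately show ?thesis using z1 by auto
      next
        case False
        then have "g (j - m) = g i" using j i unfolding F_def by auto
        then have "j - m = i" using gi False j i unfolding inj_on_def by auto
        then show ?thesis using False by auto
      qed
    qed
    then show ?thesis using i unfolding F_def by (intro exI[of _ "i + m"]) auto
  qed
  then obtain i where i: "i < m + n" "F i = z" "\<forall>j<m + n. F j = F i \<longrightarrow> j = i" by blast
  have cl: "V (m + n) = V 0" using cc(2) unfolding V_def by simp
  from through_closed[OF cc(1) cl i(1) i(3)] i(2) cc(3) p'(4) q'(4)
  show ?thesis by auto
qed

lemma odd_set:
  assumes p: "is_path conn E Op a b" and q: "is_path conn E R b a" and od: "odd (card Op + card R)"
  shows "\<exists>C. is_cycle conn E C \<and> odd (card C) \<and> C \<subseteq> Op \<union> R"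
proof -
  obtain m u f where p': "pth conn E m u f" "u 0 = a" "u m = b" "Op = f ` {..<m}" using p unfolding path_iff by blast
  obtain n w g where q': "pth conn E n w g" "w 0 = b" "w n = a" "R = g ` {..<n}" using q unfolding path_iff by blast
  note cc = concat_closed[OF p'(1-3) q'(1-3)]
  have "odd (m + n)" using od card_pth[OF p'(1)] card_pth[OF q'(1)] p'(4) q'(4) by simp
  from odd_closed[OF cc(1) cc(2) this] cc(3) p'(4) q'(4)
  show ?thesis by auto
qed

end

lemma endg_dir: "endg (conn_dir tail head) tail head"
  by unfold_locales (auto simp: conn_dir_def)

lemma endg_und: "endg (conn_und tail head) tail head"
  by unfold_locales (auto simp: conn_und_def)



lemma conn_und_sym: "conn_und t h g a b = conn_und t h g b a"
  unfolding conn_und_def by auto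

lemma revk_eq: "(i::nat) < k \<Longrightarrow> (k - i) mod k = (if i = 0 then 0 else k - i)"
  by auto

lemma rev_cyc_und:
  assumes c: "cyc (conn_und t h) E k v e"
  shows "cyc (conn_und t h) E k (\<lambda>i. v ((k - i) mod k)) (\<lambda>i. e (k - Suc i))
    \<and> (\<lambda>i. e (k - Suc i)) ` {..<k} = e ` {..<k}"
proof -
  have k: "0 < k" and vi: "inj_on v {..<k}" and ei: "inj_on e {..<k}" using c unfolding cyc_def by auto
  have r1: "inj_on (\<lambda>i. (k - i) mod k) {..<k}"
    by (rule inj_onI) (auto simp: revk_eq split: if_splits)
  have r1i: "(\<lambda>i. (k - i) mod k) ` {..<k} = {..<k}"
    by (rule endo_inj_surj[OF _ _ r1]) (use k in auto)
  have r2: "inj_on (\<lambda>i. k - Suc i) {..<k}"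
    by (rule inj_onI) auto
  have r2i: "(\<lambda>i. k - Suc i) ` {..<k} = {..<k}"
    by (rule endo_inj_surj[OF _ _ r2]) auto
  have cn: "conn_und t h (e (k - Suc i)) (v ((k - i) mod k)) (v ((k - Suc i mod k) mod k)) \<and> e (k - Suc i) \<in> E"
    if i: "i < k" for i
  proof -
    define j where "j = k - Suc i"
    have j: "j < k" "Suc j = k - i" using i unfolding j_def by auto
    have "conn_und t h (e j) (v j) (v (Suc j mod k)) \<and> e j \<in> E" using c j unfolding cyc_def by auto
    moreover have "(k - Suc i mod k) mod k = j"
    proof (cases "Suc i < k")
      case True then show ?thesis unfolding j_def by auto
    next
      case False then have "Suc i = k" using i by auto
      then show ?thesis unfolding j_def by auto
    qed
    ultimately show ?thesis using j conn_und_sym unfolding j_def by metis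
  qed
  have "inj_on (v \<circ> (\<lambda>i. (k - i) mod k)) {..<k}"
    using vi r1 r1i by (intro comp_inj_on) auto
  moreover have "inj_on (e \<circ> (\<lambda>i. k - Suc i)) {..<k}"
    using ei r2 r2i by (intro comp_inj_on) auto
  moreover have "(\<lambda>i. e (k - Suc i)) ` {..<k} = e ` {..<k}"
    using r2i by (metis image_image)
  ultimately show ?thesis using cn k unfolding cyc_def by (simp add: comp_def)
qed

lemma rev_pth_und:
  assumes p: "pth (conn_und t h) E m u e"
  shows "pth (conn_und t h) E m (\<lambda>i. u (m - i)) (\<lambda>i. e (m - Suc i))
    \<and> (\<lambda>i. e (m - Suc i)) ` {..<m} = e ` {..<m}"
proof -
  have m: "0 < m" and ui: "inj_on u {..m}" and ei: "inj_on e {..<m}" using p unfolding pth_def by auto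
  have r1: "inj_on (\<lambda>i. m - i) {..m}" by (rule inj_onI) auto
  have r1i: "(\<lambda>i. m - i) ` {..m} = {..m}" by (rule endo_inj_surj[OF _ _ r1]) auto
  have r2: "inj_on (\<lambda>i. m - Suc i) {..<m}" by (rule inj_onI) auto
  have r2i: "(\<lambda>i. m - Suc i) ` {..<m} = {..<m}" by (rule endo_inj_surj[OF _ _ r2]) auto
  have cn: "conn_und t h (e (m - Suc i)) (u (m - i)) (u (m - Suc i)) \<and> e (m - Suc i) \<in> E"
    if i: "i < m" for i
  proof -
    have "conn_und t h (e (m - Suc i)) (u (m - Suc i)) (u (Suc (m - Suc i))) \<and> e (m - Suc i) \<in> E"
      using p i unfolding pth_def wlk_def by auto
    moreover have "Suc (m - Suc i) = m - i" using i by auto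
    ultimately show ?thesis using conn_und_sym by metis
  qed
  have "inj_on (u \<circ> (\<lambda>i. m - i)) {..m}"
    using ui r1 r1i by (intro comp_inj_on) auto
  moreover have "inj_on (e \<circ> (\<lambda>i. m - Suc i)) {..<m}"
    using ei r2 r2i by (intro comp_inj_on) auto
  moreover have "(\<lambda>i. e (m - Suc i)) ` {..<m} = e ` {..<m}"
    using r2i by (metis image_image)
  ultimately show ?thesis using cn m unfolding pth_def wlk_def by (simp add: comp_def)
qed

lemma rev_path_und:
  assumes "is_path (conn_und t h) E P x y" shows "is_path (conn_und t h) E P y x"
proof -
  obtain m u e where p: "pth (conn_und t h) E m u e" "u 0 = x" "u m = y" "P = e ` {..<m}"
    using assms unfolding path_iff by blast
  note r = rev_pth_und[OF p(1)]
  show ?thesis unfolding path_iff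
    by (rule exI[of _ m], rule exI[of _ "\<lambda>i. u (m - i)"], rule exI[of _ "\<lambda>i. e (m - Suc i)"]) (use r p in auto)
qed

lemma compl_common:
  assumes en: "endg conn tail head" and c: "is_cycle conn E C2" and p: "is_path conn E P2 x y" and sub: "P2 \<subseteq> C2"
  shows "\<exists>k v e m u f. cyc conn E k v e \<and> C2 = e ` {..<k} \<and> pth conn E m u f \<and> u 0 = x \<and> u m = y
     \<and> P2 = f ` {..<m} \<and> v 0 = x"
proof -
  obtain k v e where ce: "cyc conn E k v e" "C2 = e ` {..<k}" using c unfolding cycle_iff by blast
  obtain m u f where pe: "pth conn E m u f" "u 0 = x" "u m = y" "P2 = f ` {..<m}" using p unfolding path_iff by blast
  have "x \<in> verts tail head P2" using endg.verts_pth[OF en pe(1)] pe by auto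
  moreover have "verts tail head P2 \<subseteq> verts tail head C2" using sub unfolding verts_def by auto
  ultimately have "x \<in> v ` {..<k}" using endg.verts_cyc[OF en ce(1)] ce(2) by auto
  then obtain s where s: "s < k" "x = v s" by auto
  note r = endg.rotate_cyc[OF en ce(1) s(1)]
  show ?thesis
    by (rule exI[of _ k], rule exI[of _ "\<lambda>i. v ((i + s) mod k)"], rule exI[of _ "\<lambda>i. e ((i + s) mod k)"],
        rule exI[of _ m], rule exI[of _ u], rule exI[of _ f]) (use r ce pe s in auto)
qed

lemma dir_compl:
  assumes c: "is_cycle (conn_dir t h) E C2" and p: "is_path (conn_dir t h) E P2 x y" and sub: "P2 \<subseteq> C2"
  shows "is_path (conn_dir t h) E (C2 - P2) y x"
proof -
  obtain k v e m u f where a: "cyc (conn_dir t h) E k v e" "C2 = e ` {..<k}" "pth (conn_dir t h) E m u f"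
    "u 0 = x" "u m = y" "P2 = f ` {..<m}" "v 0 = x"
    using compl_common[OF endg_dir c p sub] by blast
  have m0: "0 < m" using a unfolding pth_def by auto
  then have "f 0 \<in> e ` {..<k}" using a sub by auto
  then obtain i where i: "i < k" "f 0 = e i" by auto
  have "conn_dir t h (f 0) (u 0) (u (Suc 0))" using a m0 unfolding pth_def wlk_def by auto
  moreover have "conn_dir t h (e i) (v i) (v (Suc i mod k))" using a i unfolding cyc_def by auto
  ultimately have "v i = v 0" using i a unfolding conn_dir_def by auto
  moreover have "0 < k" using i by auto
  ultimately have "i = 0" using a i unfolding cyc_def inj_on_def by auto
  then have f0: "f 0 = e 0" using i by simp
  have sub2: "f ` {..<m} \<subseteq> e ` {..<k}" using a sub by auto
  have "\<exists>n w g. pth (conn_dir t h) E n w g \<and> w 0 = u m \<and> w n = u 0 \<and> g ` {..<n} = e ` {..<k} - f ` {..<m}"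
    by (rule endg.compl_gen[OF endg_dir a(1) a(3) sub2 _ f0]) (simp add: a(4,7))
  then obtain n w g where r: "pth (conn_dir t h) E n w g" "w 0 = u m" "w n = u 0" "g ` {..<n} = e ` {..<k} - f ` {..<m}"
    by blast
  have "C2 - P2 = g ` {..<n}" using r(4) a(2,6)  by simp
  then show ?thesis unfolding path_iff using r(1-3) a(4,5) by blast
qed

lemma und_compl:
  assumes c: "is_cycle (conn_und t h) E C2" and p: "is_path (conn_und t h) E P2 x y" and sub: "P2 \<subseteq> C2"
  shows "is_path (conn_und t h) E (C2 - P2) y x"
proof -
  obtain k v e m u f where a: "cyc (conn_und t h) E k v e" "C2 = e ` {..<k}" "pth (conn_und t h) E m u f"
    "u 0 = x" "u m = y" "P2 = f ` {..<m}" "v 0 = x"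
    using compl_common[OF endg_und c p sub] by blast
  have m0: "0 < m" using a unfolding pth_def by auto
  then have fs: "f 0 \<in> e ` {..<k}" using a sub by auto
  then obtain i where i: "i < k" "f 0 = e i" by auto
  have k0: "0 < k" using i by auto
  have vi: "inj_on v {..<k}" using a unfolding cyc_def by auto
  have c1: "conn_und t h (f 0) (u 0) (u (Suc 0))" using a m0 unfolding pth_def wlk_def by auto
  moreover have c2: "conn_und t h (e i) (v i) (v (Suc i mod k))" using a i unfolding cyc_def by auto
  have c2': "conn_und t h (f 0) (v i) (v (Suc i mod k))" using c2 i(2) by simp
  have "u 0 = v i \<or> u 0 = v (Suc i mod k)" using endg.endp_mem[OF endg_und c1 c2'] .
  then have "v 0 = v i \<or> v 0 = v (Suc i mod k)" using a by simp
  moreover have "Suc i mod k < k" using k0 by simp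
  ultimately have "i = 0 \<or> Suc i mod k = 0" using vi i k0 by (auto dest: inj_onD)
  have sub2: "f ` {..<m} \<subseteq> e ` {..<k}" using a sub by auto
  show ?thesis
  proof (cases "i = 0")
    case True
    then have f0: "f 0 = e 0" using i by simp
    have "\<exists>n w g. pth (conn_und t h) E n w g \<and> w 0 = u m \<and> w n = u 0 \<and> g ` {..<n} = e ` {..<k} - f ` {..<m}"
    by (rule endg.compl_gen[OF endg_und a(1) a(3) sub2 _ f0]) (simp add: a(4,7))
  then obtain n w g where r: "pth (conn_und t h) E n w g" "w 0 = u m" "w n = u 0" "g ` {..<n} = e ` {..<k} - f ` {..<m}"
    by blast
  have "C2 - P2 = g ` {..<n}" using r(4) a(2,6)  by simp
  then show ?thesis unfolding path_iff using r(1-3) a(4,5) by blast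
  next
    case False
    then have "Suc i mod k = 0" using \<open>i = 0 \<or> Suc i mod k = 0\<close> by simp
    have "Suc i = k"
    proof (rule ccontr)
      assume "Suc i \<noteq> k" then have "Suc i < k" using i by simp
      then show False using \<open>Suc i mod k = 0\<close> by simp
    qed
    note r = rev_cyc_und[OF a(1)]
    note r2 = conjunct2[OF r]
    have f0: "f 0 = (\<lambda>i. e (k - Suc i)) 0" using i \<open>Suc i = k\<close> by auto
    have u0: "u 0 = (\<lambda>i. v ((k - i) mod k)) 0" using a by simp
    have sub3: "f ` {..<m} \<subseteq> (\<lambda>i. e (k - Suc i)) ` {..<k}" using sub2 r by simp
    have "\<exists>n w g. pth (conn_und t h) E n w g \<and> w 0 = u m \<and> w n = u 0 \<and> g ` {..<n} = (\<lambda>i. e (k - Suc i)) ` {..<k} - f ` {..<m}"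
    by (rule endg.compl_gen[OF endg_und conjunct1[OF r] a(3) sub3 u0 f0])
  then obtain n w g where r: "pth (conn_und t h) E n w g" "w 0 = u m" "w n = u 0" "g ` {..<n} = (\<lambda>i. e (k - Suc i)) ` {..<k} - f ` {..<m}"
    by blast
  have "C2 - P2 = g ` {..<n}" using r(4) a(2,6) r2 by simp
  then show ?thesis unfolding path_iff using r(1-3) a(4,5) by blast
  qed
qed

lemma dir_cycle_set:
  assumes p: "is_path (conn_dir t h) E Op a b" and q: "is_path (conn_dir t h) E R b a"
  shows "\<exists>C. is_cycle (conn_dir t h) E C \<and> C \<subseteq> Op \<union> R"
proof -
  obtain m u f where p': "pth (conn_dir t h) E m u f" "u 0 = a" "u m = b" "Op = f ` {..<m}" using p unfolding path_iff by blast
  obtain n w g where q': "pth (conn_dir t h) E n w g" "w 0 = b" "w n = a" "R = g ` {..<n}" using q unfolding path_iff by blast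
  define V where "V = (\<lambda>t. if t \<le> m then u t else w (t - m))"
  define F where "F = (\<lambda>t. if t < m then f t else g (t - m))"
  note cc = endg.concat_closed[OF endg_dir p'(1-3) q'(1-3), folded V_def F_def]
  have cl: "V (m + n) = V 0" using cc(2) unfolding V_def by simp
  have im: "F ` {..<m + n} = Op \<union> R" using cc(3) p'(4) q'(4) unfolding F_def by simp
  have mn: "0 < m + n" using p' unfolding pth_def by auto
  have c0: "conn_dir t h (F 0) (V 0) (V (Suc 0))" "F 0 \<in> E" using cc(1) mn unfolding wlk_def by auto
  have F0: "F 0 \<in> Op \<union> R" using im mn by auto
  show ?thesis
  proof (cases "V 0 = V (Suc 0)")
    case True
    then have "conn_dir t h (F 0) (V 0) (V 0)" using c0(1) by simp
    then have "is_cycle (conn_dir t h) E {F 0}" using endg.loop_cycle[OF endg_dir[of t h] _ c0(2)] by blast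
    then show ?thesis using F0 by blast
  next
    case False
    note sg = wlk_seg[OF cc(1), of 1 "m + n"]
    have sgw: "wlk (conn_dir t h) E (m + n - 1) (\<lambda>t. V (1 + t)) (\<lambda>t. F (1 + t))" using sg mn by auto
    have "(\<lambda>t. V (1 + t)) 0 \<noteq> (\<lambda>t. V (1 + t)) (m + n - 1)" using False cl mn by auto
    note sh = endg.shorten[OF endg_dir sgw this]
    have e1: "(\<lambda>t. V (1 + t)) 0 = V 1" by simp
    have e2: "(\<lambda>t. V (1 + t)) (m + n - 1) = V (m + n)" using mn by simp
    obtain n' w' h' where r: "pth (conn_dir t h) E n' w' h'" "w' 0 = V 1" "w' n' = V (m + n)"
      "h' ` {..<n'} \<subseteq> (\<lambda>t. F (1 + t)) ` {..<m + n - 1}" using sh unfolding e1 e2 by blast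
    have r3: "w' n' = V 0" using r(3) cl by simp
    have "F 0 \<notin> h' ` {..<n'}"
    proof
      assume "F 0 \<in> h' ` {..<n'}"
      then obtain s where s: "s < n'" "h' s = F 0" by auto
      have "conn_dir t h (h' s) (w' s) (w' (Suc s))" using r(1) s unfolding pth_def wlk_def by auto
      then have "w' s = V 0" using c0 s unfolding conn_dir_def by auto
      then have "w' s = w' n'" using r3 by simp
      moreover have "inj_on w' {..n'}" using r(1) unfolding pth_def by simp
      ultimately have "s = n'" using s by (auto dest: inj_onD)
      then show False using s by simp
    qed
    note ng = this
    have r2': "w' 0 = V (Suc 0)" using r(2) by simp
    have cy: "is_cycle (conn_dir t h) E (insert (F 0) (h' ` {..<n'}))"
      by (rule endg.close_cycle_pth[OF endg_dir[of t h] c0(1) c0(2) r(1) r2' r3 ng])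
    have "(\<lambda>t. F (1 + t)) ` {..<m + n - 1} \<subseteq> F ` {..<m + n}"
    proof
      fix z assume "z \<in> (\<lambda>t. F (1 + t)) ` {..<m + n - 1}"
      then obtain x where "x < m + n - 1" "z = F (1 + x)" by blast
      then show "z \<in> F ` {..<m + n}" by (intro image_eqI[of _ _ "1 + x"]) auto
    qed
    then have "h' ` {..<n'} \<subseteq> Op \<union> R" using r(4) im by (metis subset_trans)
    then have "insert (F 0) (h' ` {..<n'}) \<subseteq> Op \<union> R" using F0 by blast
    then show ?thesis using cy by blast
  qed
qed



lemma verts_mono: "A \<subseteq> B \<Longrightarrow> verts t h A \<subseteq> verts t h B"
  unfolding verts_def by auto

context endg begin

lemma uncr_intro:
  assumes compl: "\<And>C2 P2 x y. is_cycle conn E C2 \<Longrightarrow> is_path conn E P2 x y \<Longrightarrow> P2 \<subseteq> C2 \<Longrightarrow> is_path conn E (C2 - P2) y x"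
    and fam: "\<And>C. C \<in> F \<Longrightarrow> is_cycle conn E C"
    and main: "\<And>C1 C2 P2 x y A B. C1 \<in> F \<Longrightarrow> C2 \<in> F \<Longrightarrow> is_path conn E P2 x y \<Longrightarrow> P2 \<subseteq> C2 \<Longrightarrow>
        P2 \<inter> C1 = {} \<Longrightarrow> verts tail head P2 \<inter> verts tail head C1 = {x, y} \<Longrightarrow>
        is_path conn E A x y \<Longrightarrow> is_path conn E B y x \<Longrightarrow> A \<inter> B = {} \<Longrightarrow> A \<union> B = C1 \<Longrightarrow>
        is_path conn E (C2 - P2) y x \<Longrightarrow>
        (A \<union> P2 \<in> F \<and> (\<exists>C\<in>F. C \<subseteq> B \<union> (C2 - P2))) \<or> (B \<union> P2 \<in> F \<and> (\<exists>C\<in>F. C \<subseteq> A \<union> (C2 - P2)))"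
  shows "uncrossable conn tail head E F"
  unfolding uncrossable_def
proof (intro ballI allI impI)
  fix C1 C2 P2 x y
  assume c1: "C1 \<in> F" and c2: "C2 \<in> F"
    and h: "is_path conn E P2 x y \<and> P2 \<subseteq> C2 \<and> verts tail head P2 \<inter> verts tail head C1 = {x, y}"
  have p2: "is_path conn E P2 x y" and sub: "P2 \<subseteq> C2" and vv: "verts tail head P2 \<inter> verts tail head C1 = {x, y}"
    using h by auto
  have xy: "x \<noteq> y" using path_props(3)[OF p2] .
  have xin: "x \<in> verts tail head C1" "y \<in> verts tail head C1" using vv by auto
  obtain A B where ab: "is_path conn E A x y" "is_path conn E B y x" "A \<inter> B = {}" "A \<union> B = C1"
    using split_set[OF fam[OF c1] xin xy] by blast
  have R: "is_path conn E (C2 - P2) y x" using compl[OF fam[OF c2] p2 sub] .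
  show "\<exists>P1. (is_path conn E P1 x y \<or> is_path conn E P1 y x) \<and> P1 \<subseteq> C1 \<and> P1 \<inter> P2 = {} \<and>
      P1 \<union> P2 \<in> F \<and> (\<exists>C\<in>F. C \<subseteq> C1 - P1 \<union> (C2 - P2))"
  proof (cases "P2 \<inter> C1 = {}")
    case True
    from main[OF c1 c2 p2 sub True vv ab R]
    show ?thesis
    proof
      assume a: "A \<union> P2 \<in> F \<and> (\<exists>C\<in>F. C \<subseteq> B \<union> (C2 - P2))"
      have "C1 - A = B" using ab by auto
      then show ?thesis using a ab True by (intro exI[of _ A]) auto
    next
      assume a: "B \<union> P2 \<in> F \<and> (\<exists>C\<in>F. C \<subseteq> A \<union> (C2 - P2))"
      have "C1 - B = A" using ab by auto
      then show ?thesis using a ab True by (intro exI[of _ B]) auto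
    qed
  next
    case False
    then obtain g where g: "g \<in> P2" "g \<in> C1" by auto
    have "tail g \<in> verts tail head P2" "head g \<in> verts tail head P2"
         "tail g \<in> verts tail head C1" "head g \<in> verts tail head C1"
      using g unfolding verts_def by auto
    then have th: "tail g \<in> {x, y}" "head g \<in> {x, y}" using vv by auto
    have P2g: "P2 = {g}" using single_set[OF p2 g(1) th] .
    have "g \<in> A \<or> g \<in> B" using g ab by auto
    then show ?thesis
    proof
      assume gA: "g \<in> A"
      have "A = {g}" using single_set[OF ab(1) gA th] .
      then have "B \<inter> P2 = {}" "B \<union> P2 = C1" "C1 - B = P2" using ab P2g by auto
      moreover have "C2 \<subseteq> P2 \<union> (C2 - P2)" by auto
      ultimately show ?thesis using ab c1 c2 by (intro exI[of _ B]) auto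
    next
      assume gB: "g \<in> B"
      have "B = {g}" using single_set[OF ab(2) gB] th by auto
      then have "A \<inter> P2 = {}" "A \<union> P2 = C1" "C1 - A = P2" using ab P2g by auto
      moreover have "C2 \<subseteq> P2 \<union> (C2 - P2)" by auto
      ultimately show ?thesis using ab c1 c2 by (intro exI[of _ A]) auto
    qed
  qed
qed

lemma girth_fix:
  assumes X: "is_cycle conn E X" and Y: "is_cycle conn E Y"
    and c1: "C1 \<in> cycles_girth conn E" and c2: "C2 \<in> cycles_girth conn E"
    and le: "card X + card Y \<le> card C1 + card C2"
  shows "X \<in> cycles_girth conn E" "Y \<in> cycles_girth conn E"
proof -
  have a: "is_cycle conn E C1" "\<forall>C'. is_cycle conn E C' \<longrightarrow> card C1 \<le> card C'" using c1 unfolding cycles_girth_def by auto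
  have b: "is_cycle conn E C2" "\<forall>C'. is_cycle conn E C' \<longrightarrow> card C2 \<le> card C'" using c2 unfolding cycles_girth_def by auto
  have "card C1 = card C2" using a b by (meson le_antisym)
  moreover have "card C1 \<le> card X" "card C1 \<le> card Y" using a X Y by auto
  ultimately have "card X \<le> card C1" "card Y \<le> card C1" using le by auto
  then show "X \<in> cycles_girth conn E" "Y \<in> cycles_girth conn E" using a X Y unfolding cycles_girth_def
    by (auto intro: le_trans)
qed

end



lemma card_sum:
  assumes "finite C1" "finite C2" "A \<inter> B = {}" "A \<union> B = C1" "P2 \<subseteq> C2" "B \<inter> P2 = {}" "C \<subseteq> A \<union> (C2 - P2)"
  shows "card (B \<union> P2) + card C \<le> card C1 + card C2"
proof -
  have fA: "finite A" "finite B" using assms by auto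
  have fP: "finite P2" using assms finite_subset by blast
  have "card (B \<union> P2) = card B + card P2" using assms fA fP by (simp add: card_Un_disjoint)
  moreover have "card C \<le> card (A \<union> (C2 - P2))" using assms fA by (intro card_mono) auto
  moreover have "card (A \<union> (C2 - P2)) \<le> card A + card (C2 - P2)" by (rule card_Un_le)
  moreover have "card C1 = card A + card B" using assms fA by (metis card_Un_disjoint)
  moreover have "card (C2 - P2) = card C2 - card P2" using assms fP by (simp add: card_Diff_subset)
  moreover have "card P2 \<le> card C2" using assms by (simp add: card_mono)
  ultimately show ?thesis by linarith
qed

lemma dir_main:
  assumes c1: "is_cycle (conn_dir t h) E C1" and p2: "is_path (conn_dir t h) E P2 x y" and sub: "P2 \<subseteq> C2"
    and dis: "P2 \<inter> C1 = {}" and vv: "verts t h P2 \<inter> verts t h C1 = {x, y}"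
    and A: "is_path (conn_dir t h) E A x y" and B: "is_path (conn_dir t h) E B y x"
    and ab: "A \<inter> B = {}" "A \<union> B = C1" and R: "is_path (conn_dir t h) E (C2 - P2) y x"
  shows "is_cycle (conn_dir t h) E (B \<union> P2)" "\<exists>C. is_cycle (conn_dir t h) E C \<and> C \<subseteq> A \<union> (C2 - P2)"
proof -
  have "verts t h B \<subseteq> verts t h C1" using ab by (intro verts_mono) auto
  then have "verts t h P2 \<inter> verts t h B \<subseteq> {x, y}" using vv by auto
  moreover have "P2 \<inter> B = {}" using dis ab by auto
  ultimately have "is_cycle (conn_dir t h) E (P2 \<union> B)" using endg.join_set[OF endg_dir p2 B] by blast
  then show "is_cycle (conn_dir t h) E (B \<union> P2)" by (simp add: Un_commute)
  show "\<exists>C. is_cycle (conn_dir t h) E C \<and> C \<subseteq> A \<union> (C2 - P2)" using dir_cycle_set[OF A R] .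
qed

lemma dir_all: "uncrossable (conn_dir t h) t h E (cycles_all (conn_dir t h) E)"
proof (rule endg.uncr_intro[OF endg_dir dir_compl])
  fix C assume "C \<in> cycles_all (conn_dir t h) E" then show "is_cycle (conn_dir t h) E C" unfolding cycles_all_def by auto
next
  fix C1 C2 P2 x y A B
  assume c1: "C1 \<in> cycles_all (conn_dir t h) E" and c2: "C2 \<in> cycles_all (conn_dir t h) E"
    and h: "is_path (conn_dir t h) E P2 x y" "P2 \<subseteq> C2" "P2 \<inter> C1 = {}" "verts t h P2 \<inter> verts t h C1 = {x, y}"
      "is_path (conn_dir t h) E A x y" "is_path (conn_dir t h) E B y x" "A \<inter> B = {}" "A \<union> B = C1"
      "is_path (conn_dir t h) E (C2 - P2) y x"
  have c1': "is_cycle (conn_dir t h) E C1" using c1 unfolding cycles_all_def by auto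
  note d = dir_main[OF c1' h]
  then show "(A \<union> P2 \<in> cycles_all (conn_dir t h) E \<and> (\<exists>C\<in>cycles_all (conn_dir t h) E. C \<subseteq> B \<union> (C2 - P2))) \<or>
       (B \<union> P2 \<in> cycles_all (conn_dir t h) E \<and> (\<exists>C\<in>cycles_all (conn_dir t h) E. C \<subseteq> A \<union> (C2 - P2)))"
    unfolding cycles_all_def by auto
qed

lemma dir_girth: "uncrossable (conn_dir t h) t h E (cycles_girth (conn_dir t h) E)"
proof (rule endg.uncr_intro[OF endg_dir dir_compl])
  fix C assume "C \<in> cycles_girth (conn_dir t h) E" then show "is_cycle (conn_dir t h) E C" unfolding cycles_girth_def by auto
next
  fix C1 C2 P2 x y A B
  assume c1: "C1 \<in> cycles_girth (conn_dir t h) E" and c2: "C2 \<in> cycles_girth (conn_dir t h) E"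
    and h: "is_path (conn_dir t h) E P2 x y" "P2 \<subseteq> C2" "P2 \<inter> C1 = {}" "verts t h P2 \<inter> verts t h C1 = {x, y}"
      "is_path (conn_dir t h) E A x y" "is_path (conn_dir t h) E B y x" "A \<inter> B = {}" "A \<union> B = C1"
      "is_path (conn_dir t h) E (C2 - P2) y x"
  have c1': "is_cycle (conn_dir t h) E C1" using c1 unfolding cycles_girth_def by auto
  have c2': "is_cycle (conn_dir t h) E C2" using c2 unfolding cycles_girth_def by auto
  note d = dir_main[OF c1' h]
  obtain C where C: "is_cycle (conn_dir t h) E C" "C \<subseteq> A \<union> (C2 - P2)" using d(2) by blast
  have "card (B \<union> P2) + card C \<le> card C1 + card C2"
    by (rule card_sum) (use h C endg.cycle_fin[OF endg_dir c1'] endg.cycle_fin[OF endg_dir c2'] in auto)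
  note gf = endg.girth_fix[OF endg_dir d(1) C(1) c1 c2 this]
  then show "(A \<union> P2 \<in> cycles_girth (conn_dir t h) E \<and> (\<exists>C\<in>cycles_girth (conn_dir t h) E. C \<subseteq> B \<union> (C2 - P2))) \<or>
       (B \<union> P2 \<in> cycles_girth (conn_dir t h) E \<and> (\<exists>C\<in>cycles_girth (conn_dir t h) E. C \<subseteq> A \<union> (C2 - P2)))"
    using C by blast
qed

lemma und_core:
  assumes c1: "is_cycle (conn_und t h) E C1" and p2: "is_path (conn_und t h) E P2 x y" and sub: "P2 \<subseteq> C2"
    and dis: "P2 \<inter> C1 = {}" and vv: "verts t h P2 \<inter> verts t h C1 = {x, y}"
    and A: "is_path (conn_und t h) E A x y" and B: "is_path (conn_und t h) E B y x"
    and ab: "A \<inter> B = {}" "A \<union> B = C1" and R: "is_path (conn_und t h) E (C2 - P2) y x"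
  shows "is_cycle (conn_und t h) E (A \<union> P2)" "is_cycle (conn_und t h) E (B \<union> P2)"
    "\<And>z. z \<in> A - (C2 - P2) \<or> z \<in> (C2 - P2) - A \<Longrightarrow> \<exists>C. is_cycle (conn_und t h) E C \<and> z \<in> C \<and> C \<subseteq> A \<union> (C2 - P2)"
    "\<And>z. z \<in> B - (C2 - P2) \<or> z \<in> (C2 - P2) - B \<Longrightarrow> \<exists>C. is_cycle (conn_und t h) E C \<and> z \<in> C \<and> C \<subseteq> B \<union> (C2 - P2)"
    "odd (card A + card (C2 - P2)) \<Longrightarrow> \<exists>C. is_cycle (conn_und t h) E C \<and> odd (card C) \<and> C \<subseteq> A \<union> (C2 - P2)"
    "odd (card B + card (C2 - P2)) \<Longrightarrow> \<exists>C. is_cycle (conn_und t h) E C \<and> odd (card C) \<and> C \<subseteq> B \<union> (C2 - P2)"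
proof -
  have Ar: "is_path (conn_und t h) E A y x" using rev_path_und[OF A] .
  have Br: "is_path (conn_und t h) E B x y" using rev_path_und[OF B] .
  have "verts t h B \<subseteq> verts t h C1" using ab by (intro verts_mono) auto
  then have "verts t h P2 \<inter> verts t h B \<subseteq> {x, y}" using vv by auto
  moreover have "P2 \<inter> B = {}" using dis ab by auto
  ultimately have "is_cycle (conn_und t h) E (P2 \<union> B)" using endg.join_set[OF endg_und p2 B] by blast
  then show "is_cycle (conn_und t h) E (B \<union> P2)" by (simp add: Un_commute)
  have "verts t h A \<subseteq> verts t h C1" using ab by (intro verts_mono) auto
  then have "verts t h P2 \<inter> verts t h A \<subseteq> {x, y}" using vv by auto
  moreover have "P2 \<inter> A = {}" using dis ab by auto
  ultimately have "is_cycle (conn_und t h) E (P2 \<union> A)" using endg.join_set[OF endg_und p2 Ar] by blast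
  then show "is_cycle (conn_und t h) E (A \<union> P2)" by (simp add: Un_commute)
  show "\<And>z. z \<in> A - (C2 - P2) \<or> z \<in> (C2 - P2) - A \<Longrightarrow> \<exists>C. is_cycle (conn_und t h) E C \<and> z \<in> C \<and> C \<subseteq> A \<union> (C2 - P2)"
    using endg.through_set[OF endg_und A R] by blast
  show "\<And>z. z \<in> B - (C2 - P2) \<or> z \<in> (C2 - P2) - B \<Longrightarrow> \<exists>C. is_cycle (conn_und t h) E C \<and> z \<in> C \<and> C \<subseteq> B \<union> (C2 - P2)"
    using endg.through_set[OF endg_und Br R] by blast
  show "odd (card A + card (C2 - P2)) \<Longrightarrow> \<exists>C. is_cycle (conn_und t h) E C \<and> odd (card C) \<and> C \<subseteq> A \<union> (C2 - P2)"
    using endg.odd_set[OF endg_und A R] by blast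
  show "odd (card B + card (C2 - P2)) \<Longrightarrow> \<exists>C. is_cycle (conn_und t h) E C \<and> odd (card C) \<and> C \<subseteq> B \<union> (C2 - P2)"
    using endg.odd_set[OF endg_und Br R] by blast
qed

lemma und_some_delta:
  assumes "A \<inter> B = {}" "B \<noteq> {}"
  shows "(\<exists>z. z \<in> A - R \<or> z \<in> R - A) \<or> (\<exists>z. z \<in> B - R \<or> z \<in> R - B)"
  using assms by blast



lemma par1: "odd ((a::nat) + b) \<Longrightarrow> odd (c + d) \<Longrightarrow> odd (a + c) \<Longrightarrow> odd (b + d)"
  by presburger

lemma par2: "odd ((a::nat) + b) \<Longrightarrow> odd (c + d) \<Longrightarrow> \<not> odd (a + c) \<Longrightarrow> odd (b + c) \<and> odd (a + d)"
  by presburger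

lemma und_all: "uncrossable (conn_und t h) t h E (cycles_all (conn_und t h) E)"
proof (rule endg.uncr_intro[OF endg_und und_compl])
  fix C assume "C \<in> cycles_all (conn_und t h) E" then show "is_cycle (conn_und t h) E C" unfolding cycles_all_def by auto
next
  fix C1 C2 P2 x y A B
  assume c1: "C1 \<in> cycles_all (conn_und t h) E" and c2: "C2 \<in> cycles_all (conn_und t h) E"
    and h: "is_path (conn_und t h) E P2 x y" "P2 \<subseteq> C2" "P2 \<inter> C1 = {}" "verts t h P2 \<inter> verts t h C1 = {x, y}"
      "is_path (conn_und t h) E A x y" "is_path (conn_und t h) E B y x" "A \<inter> B = {}" "A \<union> B = C1"
      "is_path (conn_und t h) E (C2 - P2) y x"
  have c1': "is_cycle (conn_und t h) E C1" using c1 unfolding cycles_all_def by auto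
  note u = und_core[OF c1' h]
  have Bne: "B \<noteq> {}" using endg.path_props(2)[OF endg_und h(6)] .
  from und_some_delta[OF h(7) Bne, of "C2 - P2"]
  show "(A \<union> P2 \<in> cycles_all (conn_und t h) E \<and> (\<exists>C\<in>cycles_all (conn_und t h) E. C \<subseteq> B \<union> (C2 - P2))) \<or>
       (B \<union> P2 \<in> cycles_all (conn_und t h) E \<and> (\<exists>C\<in>cycles_all (conn_und t h) E. C \<subseteq> A \<union> (C2 - P2)))"
  proof
    assume "\<exists>z. z \<in> A - (C2 - P2) \<or> z \<in> C2 - P2 - A"
    then obtain C where "is_cycle (conn_und t h) E C" "C \<subseteq> A \<union> (C2 - P2)" using u(3) by blast
    then show ?thesis using u(2) unfolding cycles_all_def by blast
  next
    assume "\<exists>z. z \<in> B - (C2 - P2) \<or> z \<in> C2 - P2 - B"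
    then obtain C where "is_cycle (conn_und t h) E C" "C \<subseteq> B \<union> (C2 - P2)" using u(4) by blast
    then show ?thesis using u(1) unfolding cycles_all_def by blast
  qed
qed

lemma und_girth: "uncrossable (conn_und t h) t h E (cycles_girth (conn_und t h) E)"
proof (rule endg.uncr_intro[OF endg_und und_compl])
  fix C assume "C \<in> cycles_girth (conn_und t h) E" then show "is_cycle (conn_und t h) E C" unfolding cycles_girth_def by auto
next
  fix C1 C2 P2 x y A B
  assume c1: "C1 \<in> cycles_girth (conn_und t h) E" and c2: "C2 \<in> cycles_girth (conn_und t h) E"
    and h: "is_path (conn_und t h) E P2 x y" "P2 \<subseteq> C2" "P2 \<inter> C1 = {}" "verts t h P2 \<inter> verts t h C1 = {x, y}"
      "is_path (conn_und t h) E A x y" "is_path (conn_und t h) E B y x" "A \<inter> B = {}" "A \<union> B = C1"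
      "is_path (conn_und t h) E (C2 - P2) y x"
  have c1': "is_cycle (conn_und t h) E C1" using c1 unfolding cycles_girth_def by auto
  have c2': "is_cycle (conn_und t h) E C2" using c2 unfolding cycles_girth_def by auto
  have f1: "finite C1" "finite C2" using endg.cycle_fin[OF endg_und c1'] endg.cycle_fin[OF endg_und c2'] by auto
  note u = und_core[OF c1' h]
  have Bne: "B \<noteq> {}" using endg.path_props(2)[OF endg_und h(6)] .
  from und_some_delta[OF h(7) Bne, of "C2 - P2"]
  show "(A \<union> P2 \<in> cycles_girth (conn_und t h) E \<and> (\<exists>C\<in>cycles_girth (conn_und t h) E. C \<subseteq> B \<union> (C2 - P2))) \<or>
       (B \<union> P2 \<in> cycles_girth (conn_und t h) E \<and> (\<exists>C\<in>cycles_girth (conn_und t h) E. C \<subseteq> A \<union> (C2 - P2)))"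
  proof
    assume "\<exists>z. z \<in> A - (C2 - P2) \<or> z \<in> C2 - P2 - A"
    then obtain C where C: "is_cycle (conn_und t h) E C" "C \<subseteq> A \<union> (C2 - P2)" using u(3) by blast
    have "card (B \<union> P2) + card C \<le> card C1 + card C2"
      by (rule card_sum[of C1 C2 A B]) (use h C f1 in auto)
    note gf = endg.girth_fix[OF endg_und u(2) C(1) c1 c2 this]
    then show ?thesis using C by blast
  next
    assume "\<exists>z. z \<in> B - (C2 - P2) \<or> z \<in> C2 - P2 - B"
    then obtain C where C: "is_cycle (conn_und t h) E C" "C \<subseteq> B \<union> (C2 - P2)" using u(4) by blast
    have "card (A \<union> P2) + card C \<le> card C1 + card C2"
      by (rule card_sum[of C1 C2 B A]) (use h C f1 in auto)
    note gf = endg.girth_fix[OF endg_und u(1) C(1) c1 c2 this]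
    then show ?thesis using C by blast
  qed
qed

lemma und_odd: "uncrossable (conn_und t h) t h E (cycles_odd (conn_und t h) E)"
proof (rule endg.uncr_intro[OF endg_und und_compl])
  fix C assume "C \<in> cycles_odd (conn_und t h) E" then show "is_cycle (conn_und t h) E C" unfolding cycles_odd_def by auto
next
  fix C1 C2 P2 x y A B
  assume c1: "C1 \<in> cycles_odd (conn_und t h) E" and c2: "C2 \<in> cycles_odd (conn_und t h) E"
    and h: "is_path (conn_und t h) E P2 x y" "P2 \<subseteq> C2" "P2 \<inter> C1 = {}" "verts t h P2 \<inter> verts t h C1 = {x, y}"
      "is_path (conn_und t h) E A x y" "is_path (conn_und t h) E B y x" "A \<inter> B = {}" "A \<union> B = C1"
      "is_path (conn_und t h) E (C2 - P2) y x"
  have c1': "is_cycle (conn_und t h) E C1" using c1 unfolding cycles_odd_def by auto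
  have c2': "is_cycle (conn_und t h) E C2" using c2 unfolding cycles_odd_def by auto
  have f1: "finite C1" "finite C2" using endg.cycle_fin[OF endg_und c1'] endg.cycle_fin[OF endg_und c2'] by auto
  note u = und_core[OF c1' h]
  show "(A \<union> P2 \<in> cycles_odd (conn_und t h) E \<and> (\<exists>C\<in>cycles_odd (conn_und t h) E. C \<subseteq> B \<union> (C2 - P2))) \<or>
       (B \<union> P2 \<in> cycles_odd (conn_und t h) E \<and> (\<exists>C\<in>cycles_odd (conn_und t h) E. C \<subseteq> A \<union> (C2 - P2)))"
  proof -
    have fA: "finite A" "finite B" "finite P2" "finite (C2 - P2)" using f1 h by (auto intro: finite_subset)
    have "card (A \<union> B) = card A + card B" using h(7) fA by (intro card_Un_disjoint) auto
    then have k1: "card C1 = card A + card B" using h(8) by simp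
    have "card (C2 - P2) = card C2 - card P2" using fA h(2) by (simp add: card_Diff_subset)
    moreover have "card P2 \<le> card C2" using f1 h(2) by (intro card_mono) auto
    ultimately have k2: "card C2 = card P2 + card (C2 - P2)" by linarith
    have kA: "card (A \<union> P2) = card A + card P2" using h fA by (intro card_Un_disjoint) auto
    have kB: "card (B \<union> P2) = card B + card P2" using h fA by (intro card_Un_disjoint) auto
    have o1: "odd (card C1)" "odd (card C2)" using c1 c2 unfolding cycles_odd_def by auto
    show ?thesis
    proof (cases "odd (card A + card P2)")
      case True
      then have "odd (card B + card (C2 - P2))" using par1[of "card A" "card B" "card P2" "card (C2 - P2)"] o1 k1 k2 by simp
      then obtain C where C: "is_cycle (conn_und t h) E C" "odd (card C)" "C \<subseteq> B \<union> (C2 - P2)" using u(6) by blast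
      then show ?thesis using u(1) True kA unfolding cycles_odd_def by auto
    next
      case False
      then have "odd (card B + card P2)" "odd (card A + card (C2 - P2))"
        using par2[of "card A" "card B" "card P2" "card (C2 - P2)"] o1 k1 k2 by simp_all
      moreover obtain C where C: "is_cycle (conn_und t h) E C" "odd (card C)" "C \<subseteq> A \<union> (C2 - P2)"
        using u(5) calculation(2) by blast
      ultimately show ?thesis using u(2) kB unfolding cycles_odd_def by auto
    qed
  qed
qed

lemma eq1_caseP:
  assumes D1: "C1 \<inter> D = {d1}" and D2: "C2 \<inter> D = {d2}" and AB: "A \<subseteq> C1" "B \<subseteq> C1" "A \<inter> B = {}" and P: "P2 \<subseteq> C2"
    and d2: "d2 \<in> P2" and d1: "d1 \<in> A"
  shows "(B \<union> P2) \<inter> D = {d2}" "d1 \<in> A - (C2 - P2)"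
    "C \<subseteq> A \<union> (C2 - P2) \<Longrightarrow> d1 \<in> C \<Longrightarrow> C \<inter> D = {d1}"
proof -
  have d2D: "d2 \<in> D" using D2 by auto
  have d1D: "d1 \<in> D" using D1 by auto
  have inC1: "\<And>z. z \<in> C1 \<Longrightarrow> z \<in> D \<Longrightarrow> z = d1" using D1 by auto
  have inC2: "\<And>z. z \<in> C2 \<Longrightarrow> z \<in> D \<Longrightarrow> z = d2" using D2 by auto
  have d1B: "d1 \<notin> B" using d1 AB(3) by auto
  show "(B \<union> P2) \<inter> D = {d2}"
  proof
    show "(B \<union> P2) \<inter> D \<subseteq> {d2}"
    proof
      fix z assume z: "z \<in> (B \<union> P2) \<inter> D"
      show "z \<in> {d2}"
      proof (cases "z \<in> B")
        case True then have "z = d1" using inC1 AB z by auto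
        then show ?thesis using True d1B by simp
      next
        case False then have "z \<in> P2" using z by auto
        then show ?thesis using inC2 P z by auto
      qed
    qed
    show "{d2} \<subseteq> (B \<union> P2) \<inter> D" using d2 d2D by auto
  qed
  have "d1 \<notin> C2 - P2"
  proof
    assume "d1 \<in> C2 - P2" then have "d1 = d2" using inC2 d1D by auto
    then show False using \<open>d1 \<in> C2 - P2\<close> d2 by simp
  qed
  then show "d1 \<in> A - (C2 - P2)" using d1 by simp
  show "C \<inter> D = {d1}" if C: "C \<subseteq> A \<union> (C2 - P2)" "d1 \<in> C"
  proof
    show "C \<inter> D \<subseteq> {d1}"
    proof
      fix z assume z: "z \<in> C \<inter> D"
      show "z \<in> {d1}"
      proof (cases "z \<in> A")
        case True then show ?thesis using inC1 AB z by auto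
      next
        case False then have "z \<in> C2 - P2" using z C by auto
        then have "z = d2" using inC2 z by auto
        then show ?thesis using \<open>z \<in> C2 - P2\<close> d2 by simp
      qed
    qed
    show "{d1} \<subseteq> C \<inter> D" using C d1D by auto
  qed
qed

lemma eq1_caseR:
  assumes D1: "C1 \<inter> D = {d1}" and D2: "C2 \<inter> D = {d2}" and AB: "A \<subseteq> C1" "B \<subseteq> C1" "A \<inter> B = {}" and P: "P2 \<subseteq> C2"
    and d2: "d2 \<notin> P2" and d1: "d1 \<in> A"
  shows "(A \<union> P2) \<inter> D = {d1}" "d2 \<in> (C2 - P2) - B"
    "C \<subseteq> B \<union> (C2 - P2) \<Longrightarrow> d2 \<in> C \<Longrightarrow> C \<inter> D = {d2}"
proof -
  have d2D: "d2 \<in> D" "d2 \<in> C2" using D2 by auto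
  have d1D: "d1 \<in> D" using D1 by auto
  have inC1: "\<And>z. z \<in> C1 \<Longrightarrow> z \<in> D \<Longrightarrow> z = d1" using D1 by auto
  have inC2: "\<And>z. z \<in> C2 \<Longrightarrow> z \<in> D \<Longrightarrow> z = d2" using D2 by auto
  have d1B: "d1 \<notin> B" using d1 AB(3) by auto
  show "(A \<union> P2) \<inter> D = {d1}"
  proof
    show "(A \<union> P2) \<inter> D \<subseteq> {d1}"
    proof
      fix z assume z: "z \<in> (A \<union> P2) \<inter> D"
      show "z \<in> {d1}"
      proof (cases "z \<in> A")
        case True then show ?thesis using inC1 AB z by auto
      next
        case False then have "z \<in> P2" using z by auto
        then have "z = d2" using inC2 P z by auto
        then show ?thesis using \<open>z \<in> P2\<close> d2 by simp
      qed
    qed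
    show "{d1} \<subseteq> (A \<union> P2) \<inter> D" using d1 d1D by auto
  qed
  have "d2 \<notin> B"
  proof
    assume "d2 \<in> B" then have "d2 = d1" using inC1 AB d2D by auto
    then show False using \<open>d2 \<in> B\<close> d1B by simp
  qed
  then show "d2 \<in> (C2 - P2) - B" using d2 d2D by simp
  show "C \<inter> D = {d2}" if C: "C \<subseteq> B \<union> (C2 - P2)" "d2 \<in> C"
  proof
    show "C \<inter> D \<subseteq> {d2}"
    proof
      fix z assume z: "z \<in> C \<inter> D"
      show "z \<in> {d2}"
      proof (cases "z \<in> B")
        case True then have "z = d1" using inC1 AB z by auto
        then show ?thesis using True d1B by simp
      next
        case False then have "z \<in> C2 - P2" using z C by auto
        then show ?thesis using inC2 z by auto
      qed
    qed
    show "{d2} \<subseteq> C \<inter> D" using C d2D by auto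
  qed
qed

lemma und_eq1: "uncrossable (conn_und t h) t h E (cycles_D_eq1 (conn_und t h) E D)"
proof (rule endg.uncr_intro[OF endg_und und_compl])
  fix C assume "C \<in> cycles_D_eq1 (conn_und t h) E D" then show "is_cycle (conn_und t h) E C" unfolding cycles_D_eq1_def by auto
next
  fix C1 C2 P2 x y A B
  assume c1: "C1 \<in> cycles_D_eq1 (conn_und t h) E D" and c2: "C2 \<in> cycles_D_eq1 (conn_und t h) E D"
    and h: "is_path (conn_und t h) E P2 x y" "P2 \<subseteq> C2" "P2 \<inter> C1 = {}" "verts t h P2 \<inter> verts t h C1 = {x, y}"
      "is_path (conn_und t h) E A x y" "is_path (conn_und t h) E B y x" "A \<inter> B = {}" "A \<union> B = C1"
      "is_path (conn_und t h) E (C2 - P2) y x"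
  have c1': "is_cycle (conn_und t h) E C1" using c1 unfolding cycles_D_eq1_def by auto
  have c2': "is_cycle (conn_und t h) E C2" using c2 unfolding cycles_D_eq1_def by auto
  have f1: "finite C1" "finite C2" using endg.cycle_fin[OF endg_und c1'] endg.cycle_fin[OF endg_und c2'] by auto
  note u = und_core[OF c1' h]
  show "(A \<union> P2 \<in> cycles_D_eq1 (conn_und t h) E D \<and> (\<exists>C\<in>cycles_D_eq1 (conn_und t h) E D. C \<subseteq> B \<union> (C2 - P2))) \<or>
       (B \<union> P2 \<in> cycles_D_eq1 (conn_und t h) E D \<and> (\<exists>C\<in>cycles_D_eq1 (conn_und t h) E D. C \<subseteq> A \<union> (C2 - P2)))"
  proof -
    have "card (C1 \<inter> D) = 1" "card (C2 \<inter> D) = 1" using c1 c2 unfolding cycles_D_eq1_def by auto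
    then obtain d1 d2 where D1: "C1 \<inter> D = {d1}" and D2: "C2 \<inter> D = {d2}" by (auto simp: card_1_singleton_iff)
    have AB: "A \<subseteq> C1" "B \<subseteq> C1" using h(8) by auto
    have BA: "B \<inter> A = {}" using h(7) by auto
    have "d1 \<in> A \<or> d1 \<in> B" using D1 h(8) by auto
    then show ?thesis
    proof
      assume dA: "d1 \<in> A"
      show ?thesis
      proof (cases "d2 \<in> P2")
        case True
        note q = eq1_caseP[OF D1 D2 AB h(7) h(2) True dA]
        obtain C where C: "is_cycle (conn_und t h) E C" "d1 \<in> C" "C \<subseteq> A \<union> (C2 - P2)" using u(3) q(2) by blast
        have "C \<inter> D = {d1}" using q(3)[OF C(3) C(2)] .
        then show ?thesis using u(2) q(1) C unfolding cycles_D_eq1_def by auto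
      next
        case False
        note q = eq1_caseR[OF D1 D2 AB h(7) h(2) False dA]
        obtain C where C: "is_cycle (conn_und t h) E C" "d2 \<in> C" "C \<subseteq> B \<union> (C2 - P2)" using u(4) q(2) by blast
        have "C \<inter> D = {d2}" using q(3)[OF C(3) C(2)] .
        then show ?thesis using u(1) q(1) C unfolding cycles_D_eq1_def by auto
      qed
    next
      assume dB: "d1 \<in> B"
      show ?thesis
      proof (cases "d2 \<in> P2")
        case True
        note q = eq1_caseP[OF D1 D2 AB(2) AB(1) BA h(2) True dB]
        obtain C where C: "is_cycle (conn_und t h) E C" "d1 \<in> C" "C \<subseteq> B \<union> (C2 - P2)" using u(4) q(2) by blast
        have "C \<inter> D = {d1}" using q(3)[OF C(3) C(2)] .
        then show ?thesis using u(1) q(1) C unfolding cycles_D_eq1_def by auto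
      next
        case False
        note q = eq1_caseR[OF D1 D2 AB(2) AB(1) BA h(2) False dB]
        obtain C where C: "is_cycle (conn_und t h) E C" "d2 \<in> C" "C \<subseteq> A \<union> (C2 - P2)" using u(3) q(2) by blast
        have "C \<inter> D = {d2}" using q(3)[OF C(3) C(2)] .
        then show ?thesis using u(2) q(1) C unfolding cycles_D_eq1_def by auto
      qed
    qed
  qed
qed

lemma und_ge1: "uncrossable (conn_und t h) t h E (cycles_D_ge1 (conn_und t h) E D)"
proof (rule endg.uncr_intro[OF endg_und und_compl])
  fix C assume "C \<in> cycles_D_ge1 (conn_und t h) E D" then show "is_cycle (conn_und t h) E C" unfolding cycles_D_ge1_def by auto
next
  fix C1 C2 P2 x y A B
  assume c1: "C1 \<in> cycles_D_ge1 (conn_und t h) E D" and c2: "C2 \<in> cycles_D_ge1 (conn_und t h) E D"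
    and h: "is_path (conn_und t h) E P2 x y" "P2 \<subseteq> C2" "P2 \<inter> C1 = {}" "verts t h P2 \<inter> verts t h C1 = {x, y}"
      "is_path (conn_und t h) E A x y" "is_path (conn_und t h) E B y x" "A \<inter> B = {}" "A \<union> B = C1"
      "is_path (conn_und t h) E (C2 - P2) y x"
  have c1': "is_cycle (conn_und t h) E C1" using c1 unfolding cycles_D_ge1_def by auto
  have c2': "is_cycle (conn_und t h) E C2" using c2 unfolding cycles_D_ge1_def by auto
  have f1: "finite C1" "finite C2" using endg.cycle_fin[OF endg_und c1'] endg.cycle_fin[OF endg_und c2'] by auto
  note u = und_core[OF c1' h]
  show "(A \<union> P2 \<in> cycles_D_ge1 (conn_und t h) E D \<and> (\<exists>C\<in>cycles_D_ge1 (conn_und t h) E D. C \<subseteq> B \<union> (C2 - P2))) \<or>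
       (B \<union> P2 \<in> cycles_D_ge1 (conn_und t h) E D \<and> (\<exists>C\<in>cycles_D_ge1 (conn_und t h) E D. C \<subseteq> A \<union> (C2 - P2)))"
  proof -
    have "C1 \<inter> D \<noteq> {}" "C2 \<inter> D \<noteq> {}" using c1 c2 unfolding cycles_D_ge1_def by auto
    then obtain g where g: "g \<in> C1" "g \<in> D" by blast
    have gAB: "g \<in> A \<or> g \<in> B" using g h(8) by auto
    show ?thesis
    proof (cases "(C2 - P2) \<inter> D = {}")
      case False
      then obtain f where f: "f \<in> C2 - P2" "f \<in> D" by blast
      show ?thesis
      proof (cases "f \<in> A \<or> (f \<notin> B \<and> g \<in> A)")
        case True
        then have z: "f \<in> (C2 - P2) - B" using f h(7) by blast
        obtain C where C: "is_cycle (conn_und t h) E C" "f \<in> C" "C \<subseteq> B \<union> (C2 - P2)" using u(4) z by blast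
        have "(A \<union> P2) \<inter> D \<noteq> {}" using True f g by blast
        moreover have "C \<inter> D \<noteq> {}" using C f by blast
        ultimately show ?thesis using u(1) C unfolding cycles_D_ge1_def by blast
      next
        case False
        then have z: "f \<in> (C2 - P2) - A" using f by blast
        have "f \<in> B \<or> g \<in> B" using False gAB by blast
        obtain C where C: "is_cycle (conn_und t h) E C" "f \<in> C" "C \<subseteq> A \<union> (C2 - P2)" using u(3) z by blast
        have "(B \<union> P2) \<inter> D \<noteq> {}" using \<open>f \<in> B \<or> g \<in> B\<close> f g by blast
        moreover have "C \<inter> D \<noteq> {}" using C f by blast
        ultimately show ?thesis using u(2) C unfolding cycles_D_ge1_def by blast
      qed
    next
      case True
      then obtain p where p: "p \<in> P2" "p \<in> D" using \<open>C2 \<inter> D \<noteq> {}\<close> by blast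
      from gAB show ?thesis
      proof
        assume gA: "g \<in> A"
        then have z: "g \<in> A - (C2 - P2)" using True g by blast
        obtain C where C: "is_cycle (conn_und t h) E C" "g \<in> C" "C \<subseteq> A \<union> (C2 - P2)" using u(3) z by blast
        have "(B \<union> P2) \<inter> D \<noteq> {}" using p by blast
        moreover have "C \<inter> D \<noteq> {}" using C g by blast
        ultimately show ?thesis using u(2) C unfolding cycles_D_ge1_def by blast
      next
        assume gB: "g \<in> B"
        then have z: "g \<in> B - (C2 - P2)" using True g by blast
        obtain C where C: "is_cycle (conn_und t h) E C" "g \<in> C" "C \<subseteq> B \<union> (C2 - P2)" using u(4) z by blast
        have "(A \<union> P2) \<inter> D \<noteq> {}" using p by blast
        moreover have "C \<inter> D \<noteq> {}" using C g by blast
        ultimately show ?thesis using u(1) C unfolding cycles_D_ge1_def by blast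
      qed
    qed
  qed
qed



theorem proposition2p2:
  fixes V :: "'v set" and E :: "'e set" and tail head :: "'e \<Rightarrow> 'v" and D :: "'e set"
  assumes "finite V" and "finite E"
    and "\<forall>e\<in>E. tail e \<in> V \<and> head e \<in> V"
    and "D \<subseteq> E"
  shows "uncrossable (conn_dir tail head) tail head E (cycles_all (conn_dir tail head) E) \<and>
      uncrossable (conn_dir tail head) tail head E (cycles_girth (conn_dir tail head) E) \<and>
      uncrossable (conn_und tail head) tail head E (cycles_all (conn_und tail head) E) \<and>
      uncrossable (conn_und tail head) tail head E (cycles_girth (conn_und tail head) E) \<and>
      uncrossable (conn_und tail head) tail head E (cycles_odd (conn_und tail head) E) \<and>
      uncrossable (conn_und tail head) tail head E (cycles_D_eq1 (conn_und tail head) E D) \<and>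
      uncrossable (conn_und tail head) tail head E (cycles_D_ge1 (conn_und tail head) E D)"
  by (intro conjI dir_all dir_girth und_all und_girth und_odd und_eq1 und_ge1)

end
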